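(* The generating function $H(t,x)$ is algebraic of degree $4$ and \[ H(t,x)=\frac{x\left(1-\sqrt{1-4t}\right)\left(1-x+x\sqrt{1-4t}-\sqrt{1-4tx^2}\right)}{(1-x)\sqrt{1-4t}\left(1-4tx+\sqrt{1-4tx^2}\sqrt{1-4t}-\sqrt{1-4t}-\sqrt{1-4tx^2}\right)}. \]
   Context: A bicolored Dyck path is a finite sequence of steps from $\{U_1,U_2,D\}$ ($U_1,U_2$ raise the height by $1$, $D$ lowers it by $1$) starting and ending at height $0$ and never going below height $0$; its length is its number of steps. Let $h_{n,m}$ be the number of pairs $(P,m)$ where $P$ is a bicolored Dyck path of length $2n$ containing exactly one $U_2$ step, this $U_2$ step being the $p$-th step of $P$, and $m$ is an integer with $1\le m\le p$ (a "pointer" from the $U_2$ step to the $m$-th step). Set $H(t,x)=\sum_{n,m\ge0}h_{n,m}t^nx^m$. *)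

theory Defs
  imports "HOL-Analysis.Analysis" "HOL-Computational_Algebra.Computational_Algebra"
begin

datatype step = U1 | U2 | D

fun step_val :: "step \<Rightarrow> int" where
  "step_val U1 = 1" | "step_val U2 = 1" | "step_val D = -1"

definition bicolored_dyck :: "step list \<Rightarrow> bool" where
  "bicolored_dyck P \<longleftrightarrow>
     (\<forall>k\<le>length P. 0 \<le> sum_list (map step_val (take k P))) \<and>
     sum_list (map step_val P) = 0"

definition h :: "nat \<Rightarrow> nat \<Rightarrow> nat" where
  "h n m = card {P. bicolored_dyck P \<and> length P = 2 * n \<and> count_list P U2 = 1 \<and>
                   (\<exists>p. 1 \<le> p \<and> p \<le> length P \<and> P ! (p - 1) = U2 \<and> 1 \<le> m \<and> m \<le> p)}"

text \<open>H as a formal power series in t whose coefficients are polynomials in x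
  (h n m = 0 for m > 2n).\<close>
definition H_fps :: "rat poly fps" where
  "H_fps = Abs_fps (\<lambda>n. \<Sum>m\<le>2*n. monom (of_nat (h n m)) m)"

definition eval_at_H :: "rat poly poly poly \<Rightarrow> rat poly fps" where
  "eval_at_H P = poly (map_poly fps_of_poly P) H_fps"

definition H_closed :: "real \<Rightarrow> real \<Rightarrow> real" where
  "H_closed t x =
     x * (1 - sqrt (1 - 4*t)) * (1 - x + x * sqrt (1 - 4*t) - sqrt (1 - 4*t*x^2)) /
     ((1 - x) * sqrt (1 - 4*t) *
      (1 - 4*t*x + sqrt (1 - 4*t*x^2) * sqrt (1 - 4*t) - sqrt (1 - 4*t) - sqrt (1 - 4*t*x^2)))"

end

theory Submission
  imports Defs
begin

fun cat :: "nat \<Rightarrow> nat" where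
  "cat 0 = 1" | "cat (Suc n) = (\<Sum>i\<le>n. cat i * cat (n - i))"

definition ht :: "step list \<Rightarrow> int" where "ht xs = sum_list (map step_val xs)"

definition pv :: "int \<Rightarrow> step list \<Rightarrow> bool" where
  "pv k xs \<longleftrightarrow> (\<forall>i\<le>length xs. 0 \<le> k + ht (take i xs))"

definition vfrom :: "int \<Rightarrow> step list \<Rightarrow> bool" where
  "vfrom k xs \<longleftrightarrow> pv k xs \<and> k + ht xs = 0"

lemma ht_Nil[simp]: "ht [] = 0" and ht_Cons[simp]: "ht (s # xs) = step_val s + ht xs"
  and ht_append[simp]: "ht (xs @ ys) = ht xs + ht ys"
  by (auto simp: ht_def)

lemma pv_Nil[simp]: "pv k [] \<longleftrightarrow> 0 \<le> k"
  by (simp add: pv_def)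

lemma all_le_Suc: "(\<forall>i\<le>Suc n. P i) \<longleftrightarrow> P 0 \<and> (\<forall>i\<le>n. P (Suc i))"
proof
  assume "P 0 \<and> (\<forall>i\<le>n. P (Suc i))"
  then show "\<forall>i\<le>Suc n. P i" by (metis Suc_le_mono not0_implies_Suc)
qed auto

lemma pv_Cons[simp]: "pv k (s # xs) \<longleftrightarrow> 0 \<le> k \<and> pv (k + step_val s) xs"
  unfolding pv_def by (simp only: length_Cons all_le_Suc) (simp add: add.assoc)

lemma pv_ge: "pv k xs \<Longrightarrow> 0 \<le> k"
  by (auto simp: pv_def)

lemma pv_ht: "pv k xs \<Longrightarrow> 0 \<le> k + ht xs"
  by (auto simp: pv_def)

lemma pv_append: "pv k (xs @ ys) \<longleftrightarrow> pv k xs \<and> pv (k + ht xs) ys"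
  by (induction xs arbitrary: k) (auto simp: add.assoc dest: pv_ge)

lemma vfrom_Nil[simp]: "vfrom k [] \<longleftrightarrow> k = 0"
  by (auto simp: vfrom_def)

lemma vfrom_Cons[simp]: "vfrom k (s # xs) \<longleftrightarrow> 0 \<le> k \<and> vfrom (k + step_val s) xs"
  by (auto simp: vfrom_def add.assoc)

lemma dyck_vfrom: "bicolored_dyck P \<longleftrightarrow> vfrom 0 P"
  by (simp add: bicolored_dyck_def vfrom_def pv_def ht_def)

lemma UNIV_step: "(UNIV :: step set) = {U1, U2, D}"
  using step.exhaust by auto

lemma finite_len: "finite {xs :: step list. length xs = l}"
proof -
  have "{xs :: step list. length xs = l} = {xs. set xs \<subseteq> UNIV \<and> length xs = l}" by auto
  then show ?thesis using finite_lists_length_eq[of "UNIV :: step set" l] by (simp add: UNIV_step)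
qed

lemma card_len: "card {xs :: step list. length xs = l} = 3 ^ l"
proof -
  have "{xs :: step list. length xs = l} = {xs. set xs \<subseteq> UNIV \<and> length xs = l}" by auto
  then show ?thesis using card_lists_length_eq[of "UNIV :: step set" l] by (simp add: UNIV_step numeral_3_eq_3)
qed

definition PK :: "nat \<Rightarrow> int \<Rightarrow> step list set" where
  "PK l k = {xs. length xs = l \<and> U2 \<notin> set xs \<and> vfrom k xs}"
definition fc :: "nat \<Rightarrow> int \<Rightarrow> nat" where "fc l k = card (PK l k)"

definition QK :: "nat \<Rightarrow> int \<Rightarrow> step list set" where
  "QK l k = {xs. length xs = l \<and> U2 \<notin> set xs \<and> pv 0 xs \<and> ht xs = k}"
definition gc :: "nat \<Rightarrow> int \<Rightarrow> nat" where "gc l k = card (QK l k)"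

lemma finite_PK: "finite (PK l k)"
  by (rule finite_subset[OF _ finite_len[of l]]) (auto simp: PK_def)
lemma finite_QK: "finite (QK l k)"
  by (rule finite_subset[OF _ finite_len[of l]]) (auto simp: QK_def)

lemma fc_le: "fc l k \<le> 3 ^ l"
  unfolding fc_def card_len[symmetric]
  by (rule card_mono[OF finite_len]) (auto simp: PK_def)

lemma PK_0: "PK 0 k = (if k = 0 then {[]} else {})"
  by (auto simp: PK_def)

lemma fc_0: "fc 0 k = (if k = 0 then 1 else 0)"
  by (simp add: fc_def PK_0)

lemma step_cases: "s \<noteq> U2 \<Longrightarrow> s = U1 \<or> s = D"
  by (cases s) auto

lemma PK_Suc: "PK (Suc l) k = (if 0 \<le> k then Cons U1 ` PK l (k+1) \<union> Cons D ` PK l (k-1) else {})"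
proof -
  have "xs \<in> PK (Suc l) k \<longleftrightarrow> xs \<in> (if 0 \<le> k then Cons U1 ` PK l (k+1) \<union> Cons D ` PK l (k-1) else {})" for xs
  proof (cases xs)
    case Nil then show ?thesis by (auto simp: PK_def)
  next
    case (Cons s ys)
    then show ?thesis using step_cases[of s] by (auto simp: PK_def)
  qed
  then show ?thesis by blast
qed

lemma fc_Suc: "fc (Suc l) k = (if 0 \<le> k then fc l (k+1) + fc l (k-1) else 0)"
proof (cases "0 \<le> k")
  case True
  have "card (Cons U1 ` PK l (k+1) \<union> Cons D ` PK l (k-1)) = card (Cons U1 ` PK l (k+1)) + card (Cons D ` PK l (k-1))"
    by (rule card_Un_disjoint) (auto simp: finite_PK)
  also have "\<dots> = fc l (k+1) + fc l (k-1)"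
    by (simp add: card_image fc_def)
  finally show ?thesis using True by (simp add: fc_def PK_Suc)
qed (simp add: fc_def PK_Suc)

lemma fc_neg: "k < 0 \<Longrightarrow> fc l k = 0"
  by (cases l) (simp_all add: fc_0 fc_Suc)

lemma QK_0: "QK 0 k = (if k = 0 then {[]} else {})"
  by (auto simp: QK_def)

lemma gc_0: "gc 0 k = (if k = 0 then 1 else 0)"
  by (simp add: gc_def QK_0)

lemma QK_Suc: "QK (Suc l) k = (if 0 \<le> k then (\<lambda>xs. xs @ [U1]) ` QK l (k-1) \<union> (\<lambda>xs. xs @ [D]) ` QK l (k+1) else {})"
proof -
  have "xs \<in> QK (Suc l) k \<longleftrightarrow> xs \<in> (if 0 \<le> k then (\<lambda>xs. xs @ [U1]) ` QK l (k-1) \<union> (\<lambda>xs. xs @ [D]) ` QK l (k+1) else {})" for xs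
  proof (cases xs rule: rev_cases)
    case Nil then show ?thesis by (auto simp: QK_def)
  next
    case (snoc ys s)
    then show ?thesis using step_cases[of s] by (auto simp: QK_def pv_append dest: pv_ht)
  qed
  then show ?thesis by blast
qed

lemma gc_Suc: "gc (Suc l) k = (if 0 \<le> k then gc l (k+1) + gc l (k-1) else 0)"
proof (cases "0 \<le> k")
  case True
  have "card ((\<lambda>xs. xs @ [U1]) ` QK l (k-1) \<union> (\<lambda>xs. xs @ [D]) ` QK l (k+1)) = card ((\<lambda>xs. xs @ [U1]) ` QK l (k-1)) + card ((\<lambda>xs. xs @ [D]) ` QK l (k+1))"
    by (rule card_Un_disjoint) (auto simp: finite_QK)
  also have "\<dots> = gc l (k+1) + gc l (k-1)"
    by (simp add: card_image fc_def inj_on_def gc_def)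
  finally show ?thesis using True by (simp add: gc_def QK_Suc)
qed (simp add: gc_def QK_Suc)

lemma gc_fc: "gc l k = fc l k"
  by (induction l arbitrary: k) (simp_all add: gc_0 fc_0 gc_Suc fc_Suc)

section \<open>Generating functions\<close>

definition bF :: "'a::idom fps" where "bF = Abs_fps (\<lambda>n. of_nat (cat n))"

lemma bF_0[simp]: "bF $ 0 = 1"
  by (simp add: bF_def)

lemma bF_eq: "bF = 1 + fps_X * bF ^ 2"
proof (rule fps_ext)
  fix n show "bF $ n = (1 + fps_X * bF ^ 2) $ n"
  proof (cases n)
    case (Suc m)
    have "bF $ n = of_nat (\<Sum>i\<le>m. cat i * cat (m - i))" by (simp add: bF_def Suc)
    also have "\<dots> = (bF * bF) $ m"
      by (simp add: fps_mult_nth bF_def atLeast0AtMost)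
    finally show ?thesis by (simp add: Suc power2_eq_square)
  qed simp
qed

lemma comp2_nth: "(F oo fps_X ^ 2) $ N = (if even N then F $ (N div 2) else (0::'a::idom))"
proof -
  have "(F oo fps_X ^ 2) $ N = (\<Sum>i=0..N. F $ i * (if N = 2 * i then 1 else 0))"
    by (simp add: fps_compose_nth power_mult[symmetric])
  also have "\<dots> = (if even N then F $ (N div 2) else 0)"
  proof (cases "even N")
    case True
    then have "\<And>i. (N = 2 * i) \<longleftrightarrow> (i = N div 2)" by auto
    then show ?thesis using True by (simp add: if_distrib[of "\<lambda>v. F $ _ * v"] cong: if_cong)
  next
    case False
    then have "\<And>i. N \<noteq> 2 * i" by auto
    then show ?thesis using False by simp
  qed
  finally show ?thesis .
qed

lemma comp2_inj: "F oo fps_X ^ 2 = G oo fps_X ^ 2 \<Longrightarrow> F = (G::'a::idom fps)"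
proof (rule fps_ext)
  fix n assume "F oo fps_X ^ 2 = G oo fps_X ^ 2"
  then have "(F oo fps_X ^ 2) $ (2*n) = (G oo fps_X ^ 2) $ (2*n)" by simp
  then show "F $ n = G $ n" by (simp add: comp2_nth)
qed

lemma X2_0[simp]: "(fps_X ^ 2 :: 'a::idom fps) $ 0 = 0"
  by simp

definition c2 :: "'a::idom fps" where "c2 = bF oo fps_X ^ 2"

lemma c2_0[simp]: "c2 $ 0 = 1"
  by (simp add: c2_def)

lemma c2_eq: "c2 = 1 + fps_X ^ 2 * (c2 :: 'a::idom fps) ^ 2"
proof -
  have "c2 = (1 + fps_X * bF ^ 2) oo (fps_X ^ 2 :: 'a fps)"
    unfolding c2_def by (subst bF_eq) simp
  also have "\<dots> = 1 + fps_X ^ 2 * c2 ^ 2"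
    by (simp add: fps_compose_add_distrib fps_compose_mult_distrib fps_compose_power c2_def)
  finally show ?thesis .
qed

lemma Fk_rec: "fps_X ^ k * c2 ^ (k+1) = (if k = 0 then 1 else 0) + fps_X * (fps_X ^ (k+1) * c2 ^ (k+2))
   + (if k = 0 then 0 else fps_X * (fps_X ^ (k-1) * (c2::'a::idom fps) ^ k))"
proof (cases k)
  case 0
  then show ?thesis by (subst c2_eq) (simp add: power2_eq_square algebra_simps)
next
  case (Suc j)
  have "fps_X ^ k * c2 ^ (k+1) = fps_X ^ k * c2 ^ k * (c2::'a fps)" by simp
  also have "\<dots> = fps_X ^ k * c2 ^ k * (1 + fps_X ^ 2 * c2 ^ 2)" by (subst c2_eq) simp
  also have "\<dots> = fps_X * (fps_X ^ (k+1) * c2 ^ (k+2)) + fps_X * (fps_X ^ (k-1) * c2 ^ k)"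
    using Suc by (simp add: algebra_simps power2_eq_square)
  finally show ?thesis using Suc by simp
qed

lemma Fk_nth: "of_nat (fc l (int k)) = (fps_X ^ k * c2 ^ (k+1)) $ l"
proof (induction l arbitrary: k)
  case 0
  then show ?case by (simp add: fc_0 fps_X_power_mult_nth)
next
  case (Suc l)
  have e1: "(fps_X ^ (k+1) * (c2::'a fps) ^ (k+2)) $ l = of_nat (fc l (int k + 1))"
    using Suc.IH[of "k+1"] by (simp add: add.commute)
  have e2: "(fps_X ^ (k-1) * (c2::'a fps) ^ k) $ l = of_nat (fc l (int k - 1))" if "k \<noteq> 0"
    using Suc.IH[of "k-1"] that by (simp add: of_nat_diff)
  have "(fps_X ^ k * (c2::'a fps) ^ (k+1)) $ Suc l = (fps_X ^ (k+1) * c2 ^ (k+2)) $ l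
      + (if k = 0 then 0 else (fps_X ^ (k-1) * c2 ^ k) $ l)"
    by (subst Fk_rec) (simp only: fps_add_nth fps_X_mult_nth if_distrib[of "\<lambda>v. v $ Suc l"], simp)
  also have "\<dots> = of_nat (fc l (int k + 1)) + (if k = 0 then 0 else of_nat (fc l (int k - 1)))"
    using e1 e2 by simp
  also have "\<dots> = of_nat (fc (Suc l) (int k))"
    by (simp add: fc_Suc fc_neg)
  finally show ?case by simp
qed

section \<open>Splitting at the U2 step\<close>

lemma finite_len_le: "finite {xs :: step list. length xs \<le> l}"
proof -
  have "{xs :: step list. length xs \<le> l} = {xs. set xs \<subseteq> UNIV \<and> length xs \<le> l}" by auto
  then show ?thesis using finite_lists_length_le[of "UNIV :: step set" l] by (simp add: UNIV_step)
qed

definition DYN :: "nat \<Rightarrow> step list set" where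
  "DYN N = {P. length P = N \<and> count_list P U2 = 1 \<and> vfrom 0 P}"

definition pos :: "step list \<Rightarrow> nat" where "pos P = length (takeWhile (\<lambda>s. s \<noteq> U2) P) + 1"

definition SP :: "nat \<Rightarrow> (step list \<times> step list) set" where
  "SP N = {(a,b). U2 \<notin> set a \<and> U2 \<notin> set b \<and> length a + length b + 1 = N \<and> pv 0 a \<and> vfrom (ht a + 1) b}"

lemma vfrom_split: "vfrom 0 (a @ U2 # b) \<longleftrightarrow> pv 0 a \<and> vfrom (ht a + 1) b"
  by (auto simp: vfrom_def pv_append algebra_simps dest: pv_ht)

lemma tw_split: "U2 \<notin> set a \<Longrightarrow> takeWhile (\<lambda>s. s \<noteq> U2) (a @ U2 # b) = a"
  by (subst takeWhile_append2) auto

lemma pos_split: "U2 \<notin> set a \<Longrightarrow> pos (a @ U2 # b) = length a + 1"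
  by (simp add: pos_def tw_split)

lemma count_split: "count_list (a @ U2 # b) U2 = count_list a U2 + count_list b U2 + 1"
  by simp

lemma DYN_image: "DYN N = (\<lambda>(a,b). a @ U2 # b) ` SP N"
proof
  show "(\<lambda>(a,b). a @ U2 # b) ` SP N \<subseteq> DYN N"
    by (auto simp: SP_def DYN_def vfrom_split count_list_0_iff[symmetric])
next
  show "DYN N \<subseteq> (\<lambda>(a,b). a @ U2 # b) ` SP N"
  proof
    fix P assume P: "P \<in> DYN N"
    then have "count_list P U2 = 1" by (simp add: DYN_def)
    then have "U2 \<in> set P" using count_list_0_iff[of P U2] by auto
    then obtain a b where ab: "P = a @ U2 # b" "U2 \<notin> set a" using split_list_first by metis
    have "count_list b U2 = 0" using \<open>count_list P U2 = 1\<close> ab count_list_0_iff[of a U2] by simp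
    then have "U2 \<notin> set b" by (simp add: count_list_0_iff)
    then have "(a,b) \<in> SP N" using P ab by (auto simp: SP_def DYN_def vfrom_split)
    then show "P \<in> (\<lambda>(a,b). a @ U2 # b) ` SP N" using ab by force
  qed
qed

lemma inj_SP: "inj_on (\<lambda>(a,b). a @ U2 # b) (SP N)"
proof (rule inj_onI, clarify)
  fix a b a' b' assume "(a,b) \<in> SP N" "(a',b') \<in> SP N" and eq: "a @ U2 # b = a' @ U2 # b'"
  then have na: "U2 \<notin> set a" "U2 \<notin> set a'" by (auto simp: SP_def)
  have "a = a'" using tw_split[OF na(1), of b] tw_split[OF na(2), of b'] eq by simp
  then show "a = a' \<and> b = b'" using eq by simp
qed

lemma finite_SP: "finite (SP N)"
  by (rule finite_subset[OF _ finite_cartesian_product[OF finite_len_le[of N] finite_len_le[of N]]])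
     (auto simp: SP_def)

definition AS :: "nat \<Rightarrow> step list set" where
  "AS N = {a. length a < N \<and> U2 \<notin> set a \<and> pv 0 a}"

lemma finite_AS: "finite (AS N)"
  by (rule finite_subset[OF _ finite_len_le[of N]]) (auto simp: AS_def)

lemma SP_Sigma: "SP N = Sigma (AS N) (\<lambda>a. PK (N - 1 - length a) (ht a + 1))"
  by (auto simp: SP_def AS_def PK_def)

lemma ht_le: "ht a \<le> int (length a)"
proof (induction a)
  case (Cons s a) then show ?case by (cases s) auto
qed simp

lemma sum_DYN:
  fixes x :: "'a::idom"
  shows "(\<Sum>P\<in>DYN N. x ^ pos P) = (\<Sum>l<N. \<Sum>k<N. of_nat (fc l (int k)) * of_nat (fc (N - 1 - l) (int k + 1)) * x ^ (l + 1))"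
proof -
  have "(\<Sum>P\<in>DYN N. x ^ pos P) = (\<Sum>(a,b)\<in>SP N. x ^ (length a + 1))"
    unfolding DYN_image by (subst sum.reindex[OF inj_SP]) (auto intro!: sum.cong simp: SP_def pos_split)
  also have "\<dots> = (\<Sum>a\<in>AS N. \<Sum>b\<in>PK (N - 1 - length a) (ht a + 1). x ^ (length a + 1))"
    unfolding SP_Sigma by (subst sum.Sigma) (auto simp: finite_AS finite_PK)
  also have "\<dots> = (\<Sum>a\<in>AS N. of_nat (fc (N - 1 - length a) (ht a + 1)) * x ^ (length a + 1))"
    by (simp add: fc_def)
  also have "\<dots> = (\<Sum>y\<in>{..<N} \<times> {..<N}. \<Sum>a\<in>{a \<in> AS N. (length a, nat (ht a)) = y}.
        of_nat (fc (N - 1 - length a) (ht a + 1)) * x ^ (length a + 1))"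
  proof (rule sum.group[symmetric])
    show "(\<lambda>a. (length a, nat (ht a))) ` AS N \<subseteq> {..<N} \<times> {..<N}"
    proof (clarsimp simp: AS_def)
      fix a :: "step list" assume "length a < N"
      then show "nat (ht a) < N" using ht_le[of a] by linarith
    qed
  qed (auto simp: finite_AS)
  also have "\<dots> = (\<Sum>(l,k)\<in>{..<N} \<times> {..<N}. of_nat (gc l (int k)) * of_nat (fc (N - 1 - l) (int k + 1)) * x ^ (l + 1))"
  proof (rule sum.cong[OF refl], clarify)
    fix l k assume lk: "l < N" "k < N"
    have "{a \<in> AS N. (length a, nat (ht a)) = (l,k)} = QK l (int k)"
      using lk by (auto simp: AS_def QK_def dest: pv_ht)
    then show "(\<Sum>a\<in>{a \<in> AS N. (length a, nat (ht a)) = (l,k)}. of_nat (fc (N - 1 - length a) (ht a + 1)) * x ^ (length a + 1))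
      = of_nat (gc l (int k)) * of_nat (fc (N - 1 - l) (int k + 1)) * x ^ (l + 1)"
      by (simp add: gc_def QK_def)
  qed
  also have "\<dots> = (\<Sum>l<N. \<Sum>k<N. of_nat (fc l (int k)) * of_nat (fc (N - 1 - l) (int k + 1)) * x ^ (l + 1))"
    by (simp add: sum.cartesian_product gc_fc)
  finally show ?thesis .
qed

section \<open>Scaling and the functional equation\<close>

definition scl :: "'a::comm_ring_1 \<Rightarrow> 'a fps \<Rightarrow> 'a fps" where "scl q F = Abs_fps (\<lambda>n. q ^ n * F $ n)"

lemma scl_nth[simp]: "scl q F $ n = q ^ n * F $ n"
  by (simp add: scl_def)

lemma scl_mult: "scl q (F * G) = scl q F * scl q G"
proof (rule fps_ext)
  fix n
  have "scl q (F * G) $ n = (\<Sum>i=0..n. q ^ n * (F $ i * G $ (n - i)))"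
    by (simp add: fps_mult_nth sum_distrib_left)
  also have "\<dots> = (\<Sum>i=0..n. (q ^ i * F $ i) * (q ^ (n - i) * G $ (n - i)))"
  proof (rule sum.cong[OF refl])
    fix i assume "i \<in> {0..n}"
    then have "q ^ n = q ^ i * q ^ (n - i)" by (simp add: power_add[symmetric])
    then show "q ^ n * (F $ i * G $ (n - i)) = (q ^ i * F $ i) * (q ^ (n - i) * G $ (n - i))"
      by (simp add: algebra_simps)
  qed
  finally show "scl q (F * G) $ n = (scl q F * scl q G) $ n" by (simp add: fps_mult_nth)
qed

lemma scl_1[simp]: "scl q 1 = 1"
  by (rule fps_ext) simp

lemma scl_power: "scl q (F ^ k) = scl q F ^ k"
  by (induction k) (simp_all add: scl_mult)

lemma scl_X: "scl q fps_X = fps_const q * fps_X"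
  by (rule fps_ext) (simp add: fps_X_def)

lemma scl_add: "scl q (F + G) = scl q F + scl q G"
  by (rule fps_ext) (simp add: algebra_simps)

lemma scl_const: "scl q (fps_const c) = fps_const c"
  by (rule fps_ext) simp

definition BT :: "'a::idom \<Rightarrow> 'a fps" where
  "BT x = Abs_fps (\<lambda>N. \<Sum>P\<in>DYN N. x ^ pos P)"

definition WW :: "'a::idom \<Rightarrow> 'a fps" where
  "WW x = fps_X * (fps_const x * fps_X * scl x c2 * c2)"

lemma term_eq: "fps_const x * (fps_X * (scl x (fps_X ^ k * c2 ^ (k+1)) * (fps_X ^ (k+1) * c2 ^ (k+2))))
   = WW x ^ (k+1) * (c2 :: 'a::idom fps)"
  by (simp add: WW_def scl_mult scl_power scl_X power_mult_distrib algebra_simps power_add)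

lemma DYN_0: "DYN 0 = {}"
  by (auto simp: DYN_def)

lemma BT_nth: "BT x $ N = (\<Sum>k<N. (WW x ^ (k+1) * (c2 :: 'a::idom fps)) $ N)"
proof (cases N)
  case 0 then show ?thesis by (simp add: BT_def DYN_0)
next
  case (Suc M)
  have "(\<Sum>k<N. (WW x ^ (k+1) * (c2 :: 'a fps)) $ N) = (\<Sum>k<N. x * (\<Sum>l=0..M. (x ^ l * of_nat (fc l (int k))) * of_nat (fc (M - l) (int (k+1)))))"
  proof (rule sum.cong[OF refl])
    fix k
    have "(WW x ^ (k+1) * (c2 :: 'a fps)) $ N = x * ((scl x (fps_X ^ k * c2 ^ (k+1)) * (fps_X ^ (k+1) * c2 ^ (k+2))) $ M)"
      unfolding term_eq[symmetric] by (simp add: Suc)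
    also have "\<dots> = x * (\<Sum>l=0..M. (x ^ l * of_nat (fc l (int k))) * of_nat (fc (M - l) (int (k+1))))"
    proof -
      have h1: "\<And>l. (fps_X ^ k * (c2::'a fps) ^ (k+1)) $ l = of_nat (fc l (int k))"
        using Fk_nth by metis
      have h2: "\<And>l. (fps_X ^ (k+1) * (c2::'a fps) ^ (k+2)) $ l = of_nat (fc l (int (k+1)))"
        by (subst Fk_nth[of _ "k+1"]) (simp add: numeral_2_eq_2)
      show ?thesis unfolding fps_mult_nth[of "scl x (fps_X ^ k * c2 ^ (k+1))"] scl_nth h1 h2
        by (simp add: mult.assoc)
    qed
    finally show "(WW x ^ (k+1) * (c2 :: 'a fps)) $ N = x * (\<Sum>l=0..M. (x ^ l * of_nat (fc l (int k))) * of_nat (fc (M - l) (int (k+1))))" .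
  qed
  also have "\<dots> = (\<Sum>k<N. \<Sum>l<N. of_nat (fc l (int k)) * of_nat (fc (N - 1 - l) (int k + 1)) * x ^ (l + 1))"
  proof (rule sum.cong[OF refl])
    fix k
    have "{0..M} = {..<N}" using Suc by auto
    then show "x * (\<Sum>l=0..M. (x ^ l * of_nat (fc l (int k))) * of_nat (fc (M - l) (int (k+1))))
      = (\<Sum>l<N. of_nat (fc l (int k)) * of_nat (fc (N - 1 - l) (int k + 1)) * x ^ (l + 1))"
      by (simp add: sum_distrib_left Suc algebra_simps)
  qed
  also have "\<dots> = (\<Sum>l<N. \<Sum>k<N. of_nat (fc l (int k)) * of_nat (fc (N - 1 - l) (int k + 1)) * x ^ (l + 1))"
    by (rule sum.swap)
  finally show ?thesis by (simp add: BT_def sum_DYN)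
qed

lemma geo_tel:
  fixes Y c :: "'a::comm_ring_1"
  shows "(1 - Y) * (\<Sum>k<M. Y ^ (k+1) * c) = Y * c - Y ^ (M+1) * c"
proof (induction M)
  case (Suc M)
  have "(1 - Y) * (\<Sum>k<Suc M. Y ^ (k+1) * c) = (1 - Y) * (\<Sum>k<M. Y ^ (k+1) * c) + (1 - Y) * (Y ^ (M+1) * c)"
    by (simp add: distrib_left)
  also have "\<dots> = Y * c - Y ^ (Suc M + 1) * c"
    unfolding Suc.IH by (simp add: algebra_simps)
  finally show ?case .
qed simp

lemma geo_sum:
  fixes V c G :: "'a::idom fps"
  assumes G: "\<And>N. G $ N = (\<Sum>k<N. ((fps_X * V) ^ (k+1) * c) $ N)"
  shows "(1 - fps_X * V) * G = fps_X * V * c"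
proof -
  define S where "S M = (\<Sum>k<M. (fps_X * V) ^ (k+1) * c)" for M
  have vanish: "((fps_X * V) ^ (k+1) * c) $ N = 0" if "N \<le> k" for k N
  proof -
    have "(fps_X * V) ^ (k+1) * c = fps_X ^ (k+1) * (V ^ (k+1) * c)"
      by (simp add: power_mult_distrib algebra_simps)
    then have "((fps_X * V) ^ (k+1) * c) $ N = (fps_X ^ (k+1) * (V ^ (k+1) * c)) $ N" by (rule arg_cong)
    then show ?thesis using that by (simp only: fps_X_power_mult_nth) simp
  qed
  have a: "G $ N = S M $ N" if "N < M" for N M
  proof -
    have "S M $ N = (\<Sum>k<M. ((fps_X * V) ^ (k+1) * c) $ N)" by (simp add: S_def fps_sum_nth)
    also have "\<dots> = (\<Sum>k<N. ((fps_X * V) ^ (k+1) * c) $ N)"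
      by (rule sum.mono_neutral_right) (use that vanish in auto)
    finally show ?thesis using G by simp
  qed
  have b: "(1 - fps_X * V) * S M = fps_X * V * c - (fps_X * V) ^ (M+1) * c" for M
    unfolding S_def by (rule geo_tel)
  show ?thesis
  proof (rule fps_ext)
    fix N
    have "((1 - fps_X * V) * G) $ N = (\<Sum>i=0..N. (1 - fps_X * V) $ i * G $ (N - i))"
      by (rule fps_mult_nth)
    also have "\<dots> = (\<Sum>i=0..N. (1 - fps_X * V) $ i * S (N+1) $ (N - i))"
      by (rule sum.cong[OF refl]) (simp add: a)
    also have "\<dots> = ((1 - fps_X * V) * S (N+1)) $ N"
      by (rule fps_mult_nth[symmetric])
    also have "\<dots> = (fps_X * V * c) $ N - ((fps_X * V) ^ ((N+1)+1) * c) $ N"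
      by (simp only: b fps_sub_nth)
    also have "\<dots> = (fps_X * V * c) $ N"
      using vanish[of N "N+1"] by simp
    finally show "((1 - fps_X * V) * G) $ N = (fps_X * V * c) $ N" .
  qed
qed

lemma BT_eq: "(1 - WW x) * BT x = WW x * (c2 :: 'a::idom fps)"
  unfolding WW_def by (rule geo_sum) (simp add: BT_nth[unfolded WW_def])

lemma parity: "even (int (length xs) + ht xs)"
proof (induction xs)
  case (Cons s xs)
  then show ?case by (cases s) (auto simp: algebra_simps)
qed simp

lemma DYN_odd: "odd N \<Longrightarrow> DYN N = {}"
  using parity by (fastforce simp: DYN_def vfrom_def)

definition BF :: "'a::idom \<Rightarrow> 'a fps" where
  "BF x = Abs_fps (\<lambda>n. \<Sum>P\<in>DYN (2*n). x ^ pos P)"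

lemma BT_comp: "BT x = BF x oo fps_X ^ 2"
  by (rule fps_ext) (auto simp: comp2_nth BT_def BF_def DYN_odd)

definition aF :: "'a::idom \<Rightarrow> 'a fps" where "aF x = scl (x^2) bF"

lemma scl_c2: "scl x c2 = aF x oo fps_X ^ 2"
  by (rule fps_ext) (auto simp: comp2_nth c2_def aF_def power_mult[symmetric])

definition wF :: "'a::idom \<Rightarrow> 'a fps" where "wF x = fps_const x * fps_X * aF x * bF"

lemma WW_comp: "WW x = wF x oo fps_X ^ 2"
proof -
  have "wF x oo fps_X ^ 2 = fps_const x * fps_X ^ 2 * scl x c2 * c2"
    unfolding wF_def
    by (simp only: fps_compose_mult_distrib[OF X2_0] fps_const_compose fps_X_fps_compose_startby0[OF X2_0]
        scl_c2[symmetric] c2_def[symmetric])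
  then show ?thesis by (simp add: WW_def power2_eq_square algebra_simps)
qed

theorem BF_eq: "(1 - wF x) * BF x = wF x * (bF :: 'a::idom fps)"
proof -
  have "((1 - wF x) * BF x - wF x * bF) oo fps_X ^ 2 = ((1 - WW x) * BT x - WW x * (c2 :: 'a fps))"
    by (simp add: fps_compose_sub_distrib fps_compose_mult_distrib WW_comp BT_comp c2_def)
  also have "\<dots> = 0 oo fps_X ^ 2" by (simp add: BT_eq)
  finally show ?thesis using comp2_inj by fastforce
qed

section \<open>The generating function H\<close>

lemma nth_U2:
  assumes "U2 \<notin> set a" "U2 \<notin> set b" "i < length (a @ U2 # b)"
  shows "(a @ U2 # b) ! i = U2 \<longleftrightarrow> i = length a"
proof -
  consider "i < length a" | "i = length a" | "length a < i" by linarith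
  then show ?thesis
  proof cases
    case 1
    then have e: "(a @ U2 # b) ! i = a ! i" by (simp add: nth_append)
    have m: "a ! i \<in> set a" using 1 by (rule nth_mem)
    have "a ! i \<noteq> U2" using m assms(1) by auto
    then show ?thesis using 1 e by simp
  next
    case 2 then show ?thesis by (simp add: nth_append)
  next
    case 3
    then obtain j where j: "i = Suc (length a + j)" using less_imp_Suc_add by blast
    then have e: "(a @ U2 # b) ! i = b ! j" by (simp add: nth_append_right)
    have "j < length b" using j assms(3) by simp
    then have m: "b ! j \<in> set b" by (rule nth_mem)
    have "b ! j \<noteq> U2" using m assms(2) by auto
    then show ?thesis using j e by simp
  qed
qed

lemma h_alt: "h n m = card {P \<in> DYN (2*n). 1 \<le> m \<and> m \<le> pos P}"
proof -
  have "{P. bicolored_dyck P \<and> length P = 2 * n \<and> count_list P U2 = 1 \<and>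
                   (\<exists>p. 1 \<le> p \<and> p \<le> length P \<and> P ! (p - 1) = U2 \<and> 1 \<le> m \<and> m \<le> p)}
      = {P \<in> DYN (2*n). 1 \<le> m \<and> m \<le> pos P}"
  proof (rule set_eqI)
    fix P
    show "P \<in> {P. bicolored_dyck P \<and> length P = 2 * n \<and> count_list P U2 = 1 \<and>
                   (\<exists>p. 1 \<le> p \<and> p \<le> length P \<and> P ! (p - 1) = U2 \<and> 1 \<le> m \<and> m \<le> p)}
      \<longleftrightarrow> P \<in> {P \<in> DYN (2*n). 1 \<le> m \<and> m \<le> pos P}"
    proof (cases "P \<in> DYN (2*n)")
      case True
      then obtain a b where ab: "P = a @ U2 # b" "(a,b) \<in> SP (2*n)" unfolding DYN_image by auto
      then have nab: "U2 \<notin> set a" "U2 \<notin> set b" by (auto simp: SP_def)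
      have "(\<exists>p. 1 \<le> p \<and> p \<le> length P \<and> P ! (p - 1) = U2 \<and> 1 \<le> m \<and> m \<le> p) \<longleftrightarrow> 1 \<le> m \<and> m \<le> pos P"
      proof
        assume "\<exists>p. 1 \<le> p \<and> p \<le> length P \<and> P ! (p - 1) = U2 \<and> 1 \<le> m \<and> m \<le> p"
        then obtain p where p: "1 \<le> p" "p \<le> length P" "P ! (p - 1) = U2" "1 \<le> m" "m \<le> p" by blast
        then have "p - 1 = length a" using nth_U2[OF nab, of "p - 1"] ab by auto
        then show "1 \<le> m \<and> m \<le> pos P" using p ab nab by (simp add: pos_split)
      next
        assume "1 \<le> m \<and> m \<le> pos P"
        then show "\<exists>p. 1 \<le> p \<and> p \<le> length P \<and> P ! (p - 1) = U2 \<and> 1 \<le> m \<and> m \<le> p"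
          using ab nab by (intro exI[of _ "length a + 1"]) (simp add: pos_split)
      qed
      then show ?thesis using True by (simp add: DYN_def dyck_vfrom)
    qed (auto simp: DYN_def dyck_vfrom)
  qed
  then show ?thesis by (simp add: h_def)
qed

lemma pos_le: "P \<in> DYN N \<Longrightarrow> pos P \<le> N"
  unfolding DYN_image by (auto simp: SP_def pos_split)

lemma finite_DYN: "finite (DYN N)"
  unfolding DYN_image by (simp add: finite_SP)

lemma geom_fin: "(1 - x) * (\<Sum>m=1..p. x ^ m) = x - x ^ (p + 1)" for x :: "'a::comm_ring_1"
proof (induction p)
  case (Suc p)
  have e: "(\<Sum>m=1..Suc p. x ^ m) = (\<Sum>m=1..p. x ^ m) + x ^ Suc p" by simp
  show ?case unfolding e distrib_left Suc.IH by (simp add: algebra_simps)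
qed simp

definition Fg :: "'a::idom \<Rightarrow> 'a fps" where
  "Fg x = Abs_fps (\<lambda>n. \<Sum>m\<le>2*n. of_nat (h n m) * x ^ m)"

lemma Fg_eq: "fps_const (1 - x) * Fg x = fps_const x * (BF 1 - BF (x::'a::idom))"
proof (rule fps_ext)
  fix n
  let ?S = "DYN (2*n)"
  have "(\<Sum>m\<le>2*n. of_nat (h n m) * x ^ m) = (\<Sum>m\<le>2*n. \<Sum>P\<in>?S. if 1 \<le> m \<and> m \<le> pos P then x ^ m else 0)"
  proof (rule sum.cong[OF refl])
    fix m
    have "of_nat (h n m) = (\<Sum>P\<in>{P \<in> ?S. 1 \<le> m \<and> m \<le> pos P}. (1::'a))"
      by (simp add: h_alt)
    also have "\<dots> = (\<Sum>P\<in>?S. if 1 \<le> m \<and> m \<le> pos P then 1 else 0)"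
      by (rule sum.inter_filter[OF finite_DYN])
    finally show "of_nat (h n m) * x ^ m = (\<Sum>P\<in>?S. if 1 \<le> m \<and> m \<le> pos P then x ^ m else 0)"
      by (simp only: sum_distrib_right) (rule sum.cong[OF refl], simp)
  qed
  also have "\<dots> = (\<Sum>P\<in>?S. \<Sum>m\<le>2*n. if 1 \<le> m \<and> m \<le> pos P then x ^ m else 0)"
    by (rule sum.swap)
  also have "\<dots> = (\<Sum>P\<in>?S. \<Sum>m=1..pos P. x ^ m)"
  proof (rule sum.cong[OF refl])
    fix P assume "P \<in> ?S"
    then have "pos P \<le> 2 * n" by (rule pos_le)
    then have "{m \<in> {..2*n}. 1 \<le> m \<and> m \<le> pos P} = {1..pos P}" by auto
    then show "(\<Sum>m\<le>2*n. if 1 \<le> m \<and> m \<le> pos P then x ^ m else 0) = (\<Sum>m=1..pos P. x ^ m)"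
      by (simp add: sum.inter_filter[symmetric])
  qed
  finally have e: "Fg x $ n = (\<Sum>P\<in>?S. \<Sum>m=1..pos P. x ^ m)" by (simp add: Fg_def)
  have "(fps_const (1 - x) * Fg x) $ n = (1 - x) * (\<Sum>P\<in>?S. \<Sum>m=1..pos P. x ^ m)"
    by (simp only: fps_mult_left_const_nth e)
  also have "\<dots> = (\<Sum>P\<in>?S. (1 - x) * (\<Sum>m=1..pos P. x ^ m))" by (rule sum_distrib_left)
  also have "\<dots> = (\<Sum>P\<in>?S. x - x ^ (pos P + 1))" by (simp only: geom_fin)
  also have "\<dots> = x * ((\<Sum>P\<in>?S. 1 ^ pos P) - (\<Sum>P\<in>?S. x ^ pos P))"
    by (simp add: sum_subtractf sum_distrib_left right_diff_distrib)
  finally show "(fps_const (1 - x) * Fg x) $ n = (fps_const x * (BF 1 - BF x)) $ n"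
    by (simp add: BF_def)
qed

lemma aF_eq: "aF x = 1 + fps_const (x^2) * fps_X * (aF (x::'a::idom))^2"
proof -
  have "aF x = scl (x^2) (1 + fps_X * bF ^ 2)" unfolding aF_def by (subst bF_eq) simp
  also have "\<dots> = 1 + fps_const (x^2) * fps_X * (aF x)^2"
    by (simp add: scl_add scl_mult scl_power scl_X aF_def)
  finally show ?thesis .
qed

lemma aF_1: "aF 1 = bF"
  by (rule fps_ext) (simp add: aF_def)

lemma A_eq: "(1 - 2 * fps_X * bF) * BF 1 = fps_X * (bF :: 'a::idom fps)^2"
proof -
  have w1: "wF 1 = fps_X * (bF :: 'a fps)^2" by (simp add: wF_def aF_1 power2_eq_square)
  have "1 - wF 1 = bF * (1 - 2 * fps_X * (bF :: 'a fps))"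
  proof -
    have "bF * (1 - 2 * fps_X * (bF :: 'a fps)) = bF - 2 * (fps_X * bF^2)" by (simp add: algebra_simps power2_eq_square)
    also have "\<dots> = 1 - fps_X * bF^2" by (subst (1) bF_eq) (simp add: algebra_simps)
    finally show ?thesis by (simp add: w1)
  qed
  have "bF * ((1 - 2 * fps_X * bF) * BF 1) = (bF * (1 - 2 * fps_X * (bF :: 'a fps))) * BF 1"
    by (simp add: mult.assoc)
  also have "\<dots> = (1 - wF 1) * BF 1" using \<open>1 - wF 1 = _\<close> by simp
  also have "\<dots> = wF 1 * bF" by (rule BF_eq)
  also have "\<dots> = bF * (fps_X * (bF :: 'a fps)^2)" by (simp add: w1 mult.commute)
  finally have "bF * ((1 - 2 * fps_X * bF) * BF 1) = bF * (fps_X * (bF :: 'a fps)^2)" .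
  moreover have "(bF :: 'a fps) \<noteq> 0" using bF_0 by (metis fps_zero_nth zero_neq_one)
  ultimately show ?thesis by simp
qed

lemma real_alg:
  fixes t x c al A B F :: real
  assumes t: "0 < t" "t < 1/30" and x: "0 < x" "x < 1"
    and c: "0 \<le> c" "c \<le> 2" and al: "0 \<le> al" "al \<le> 2"
    and ceq: "c = 1 + t * c^2" and aleq: "al = 1 + x^2 * t * al^2"
    and Aeq: "(1 - 2*t*c) * A = t * c^2"
    and Beq: "(1 - x*t*al*c) * B = x*t*al*c*c"
    and Feq: "(1 - x) * F = x * (A - B)"
  shows "F = H_closed t x"
proof -
  define sq where "sq = 1 - 2*t*c"
  define r where "r = 1 - 2*x^2*t*al"
  define wq where "wq = x*t*al*c"
  have "t * c \<le> (1/30) * 2" using t c by (intro mult_mono) auto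
  then have tc: "t * c \<le> 2/30" by simp
  have spos: "sq > 0" using tc by (simp add: sq_def)
  have x2: "x^2 \<le> 1" using x by (simp add: power_le_one)
  have "x^2 * t * al \<le> 1 * (1/30) * 2" using x2 t al
    by (intro mult_mono) (auto simp: zero_le_mult_iff)
  then have rpos: "r > 0" by (simp add: r_def)
  have "wq \<le> 1 * (1/30) * 2 * 2" unfolding wq_def using x t al c
    by (intro mult_mono) (auto simp: zero_le_mult_iff)
  then have w1: "1 - wq \<noteq> 0" by simp
  have tceq: "t * c^2 = c - 1" using ceq by simp
  have aleq': "x^2 * t * al^2 = al - 1" using aleq by simp
  have "sq^2 = 1 - 4*t"
  proof -
    have "sq^2 = 1 - 4*t*c + 4*(t*c^2)*t" by (simp add: sq_def power2_eq_square algebra_simps)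
    also have "\<dots> = 1 - 4*t" unfolding tceq by (simp add: algebra_simps)
    finally show ?thesis .
  qed
  then have ss: "sqrt (1 - 4*t) = sq" using spos by (metis abs_of_pos real_sqrt_abs)
  have "r^2 = 1 - 4*t*x^2"
  proof -
    have "r^2 = 1 - 4*x^2*t*al + 4*x^2*t*(x^2 * t * al^2)" by (simp add: r_def power2_eq_square algebra_simps)
    also have "\<dots> = 1 - 4*t*x^2" unfolding aleq' by (simp add: algebra_simps)
    finally show ?thesis .
  qed
  then have rr: "sqrt (1 - 4*t*x^2) = r" using rpos by (metis abs_of_pos real_sqrt_abs)
  have den: "1 - 4*t*x + r * sq - sq - r = 4*t*x*(wq - 1)"
    by (simp add: r_def sq_def wq_def algebra_simps power2_eq_square)
  have num: "x * (1 - sq) * (1 - x + x * sq - r) = x * (2*t*c) * (2*x*t*(x*al - c))"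
    by (simp add: r_def sq_def algebra_simps power2_eq_square)
  have "H_closed t x = (x * (2*t*c) * (2*x*t*(x*al - c))) / ((1 - x) * sq * (4*t*x*(wq - 1)))"
    unfolding H_closed_def ss rr den num by simp
  also have "\<dots> = (4*t*x) * (t*x*c*(x*al - c)) / ((4*t*x) * ((1 - x) * sq * (wq - 1)))"
    by (rule arg_cong2[where f="(/)"]) (simp_all add: algebra_simps)
  also have "\<dots> = t*x*c*(x*al - c) / ((1 - x) * sq * (wq - 1))"
    using t x by (intro mult_divide_mult_cancel_left) simp
  finally have Hc: "H_closed t x = t*x*c*(x*al - c) / ((1 - x) * sq * (wq - 1))" .
  have A: "A = t*c^2 / sq" using Aeq spos by (simp add: sq_def field_simps)
  have B: "B = wq*c/(1 - wq)" using Beq w1 by (simp add: wq_def field_simps)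
  have F: "F = x * (A - B) / (1 - x)" using Feq x by (simp add: field_simps)
  have key: "t*c^2*(1 - wq) - wq*c* sq = t*c*(c - x*al)" for dummy :: nat
  proof -
    have "t*c^2*(1 - wq) - wq*c* sq + t*c*(x*al - c) = c * (t*x*al*(t*c^2 - c + 1))"
      by (simp add: wq_def sq_def algebra_simps power2_eq_square)
    also have "\<dots> = 0" using ceq by simp
    finally have h: "t*c^2*(1 - wq) - wq*c* sq = -(t*c*(x*al - c))" by (simp add: eq_neg_iff_add_eq_0)
    have "-(t*c*(x*al - c)) = t*c*(c - x*al)" by (simp add: algebra_simps)
    then show ?thesis using h by simp
  qed
  have "F = x / (1 - x) * ((t*c^2*(1 - wq) - wq*c* sq) / (sq * (1 - wq)))"
    unfolding F A B using spos w1 x by (simp add: field_simps)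
  also have "\<dots> = H_closed t x"
  proof -
    have nz1: "(1 - x) * sq * (wq - 1) \<noteq> 0" using spos w1 x by auto
    have nz2: "sq * (1 - wq) \<noteq> 0" using spos w1 by auto
    have nz3: "1 - x \<noteq> 0" using x by auto
    show ?thesis unfolding key Hc using nz1 nz2 nz3 by (simp add: field_simps)
  qed
  finally show ?thesis .
qed

definition RR :: "real fps \<Rightarrow> bool" where "RR f \<longleftrightarrow> ereal (1/28) \<le> fps_conv_radius f"

lemma RR_bound:
  assumes "\<And>n. \<bar>f $ n\<bar> \<le> 27 ^ n"
  shows "RR f"
proof -
  have "summable (\<lambda>n. fps_nth f n * (1/28 :: real) ^ n)"
  proof (rule summable_comparison_test')
    show "summable (\<lambda>n. (27/28 :: real) ^ n)" by (rule summable_geometric) simp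
    fix n :: nat
    have "norm (fps_nth f n * (1/28 :: real) ^ n) = \<bar>f $ n\<bar> * (1/28) ^ n"
      by (simp add: abs_mult)
    also have "\<dots> \<le> 27 ^ n * (1/28) ^ n" using assms[of n] by (intro mult_right_mono) auto
    also have "\<dots> = (27/28) ^ n" by (simp add: power_divide)
    finally show "norm (fps_nth f n * (1/28 :: real) ^ n) \<le> (27/28) ^ n" .
  qed
  then have "conv_radius (fps_nth f) \<ge> norm (1/28 :: real)" by (rule conv_radius_geI)
  then show ?thesis by (simp add: RR_def fps_conv_radius_def)
qed

lemma RR_mult[intro]: "RR f \<Longrightarrow> RR g \<Longrightarrow> RR (f * g)"
  unfolding RR_def by (rule order.trans[OF min.boundedI fps_conv_radius_mult])
lemma RR_add[intro]: "RR f \<Longrightarrow> RR g \<Longrightarrow> RR (f + g)"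
  unfolding RR_def by (rule order.trans[OF min.boundedI fps_conv_radius_add])
lemma RR_diff[intro]: "RR f \<Longrightarrow> RR g \<Longrightarrow> RR (f - g)"
  unfolding RR_def by (rule order.trans[OF min.boundedI fps_conv_radius_diff])
lemma RR_power[intro]: "RR f \<Longrightarrow> RR (f ^ n)"
  unfolding RR_def by (rule order.trans[OF _ fps_conv_radius_power])
lemma RR_const[intro]: "RR (fps_const c)" by (simp add: RR_def)
lemma RR_1[intro]: "RR 1" by (simp add: RR_def)
lemma RR_numeral[intro]: "RR (numeral n)" by (simp add: RR_def)
lemma RR_X[intro]: "RR fps_X" by (simp add: RR_def)

lemma RR_lt: "RR f \<Longrightarrow> \<bar>t\<bar> < 1/28 \<Longrightarrow> norm t < fps_conv_radius f" for t :: real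
  unfolding RR_def by (rule less_le_trans[of _ "ereal (1/28)"]) auto

lemma ev_mult: "RR f \<Longrightarrow> RR g \<Longrightarrow> \<bar>t::real\<bar> < 1/28 \<Longrightarrow> eval_fps (f * g) t = eval_fps f t * eval_fps g t"
  by (intro eval_fps_mult RR_lt)
lemma ev_add: "RR f \<Longrightarrow> RR g \<Longrightarrow> \<bar>t::real\<bar> < 1/28 \<Longrightarrow> eval_fps (f + g) t = eval_fps f t + eval_fps g t"
  by (intro eval_fps_add RR_lt)
lemma ev_diff: "RR f \<Longrightarrow> RR g \<Longrightarrow> \<bar>t::real\<bar> < 1/28 \<Longrightarrow> eval_fps (f - g) t = eval_fps f t - eval_fps g t"
  by (intro eval_fps_diff RR_lt)
lemma ev_power: "RR f \<Longrightarrow> \<bar>t::real\<bar> < 1/28 \<Longrightarrow> eval_fps (f ^ n) t = eval_fps f t ^ n"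
  by (intro eval_fps_power RR_lt)

lemma ev_bound:
  fixes f :: "real fps"
  assumes "\<And>n. 0 \<le> f $ n \<and> f $ n \<le> 9 ^ n" "0 \<le> t" "t < 1/30"
  shows "0 \<le> eval_fps f t \<and> eval_fps f t \<le> 2"
proof -
  have R: "RR f" by (rule RR_bound) (use assms(1) in \<open>auto intro: order.trans[OF _ power_mono[of 9 27]]\<close>)
  have s1: "summable (\<lambda>n. f $ n * t ^ n)" using summable_fps[OF RR_lt[OF R]] assms by simp
  have s2: "summable (\<lambda>n. (9 * t) ^ n)" using assms by (intro summable_geometric) simp
  have "eval_fps f t = (\<Sum>n. f $ n * t ^ n)" by (simp add: eval_fps_def)
  also have "\<dots> \<le> (\<Sum>n. (9 * t) ^ n)"
    using s1 s2 assms by (intro suminf_le) (auto simp: power_mult_distrib intro!: mult_right_mono)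
  also have "\<dots> = 1 / (1 - 9 * t)" using assms by (intro suminf_geometric) simp
  also have "\<dots> \<le> 2" using assms by (simp add: field_simps)
  finally have "eval_fps f t \<le> 2" .
  moreover have "0 \<le> eval_fps f t" unfolding eval_fps_def using s1 assms by (intro suminf_nonneg) auto
  ultimately show ?thesis by simp
qed

lemma cat_le: "cat n \<le> 9 ^ n"
proof -
  have "real (cat n) = (bF :: real fps) $ n" by (simp add: bF_def)
  also have "\<dots> = (c2 :: real fps) $ (2*n)" by (simp add: c2_def comp2_nth)
  also have "\<dots> = (fps_X ^ 0 * (c2 :: real fps) ^ (0+1)) $ (2*n)" by simp
  also have "\<dots> = real (fc (2*n) (int 0))" by (rule Fk_nth[symmetric])
  finally have "cat n = fc (2*n) 0" by simp
  also have "\<dots> \<le> 3 ^ (2*n)" by (rule fc_le)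
  finally show ?thesis by (simp add: power_mult)
qed

lemma card_DYN: "card (DYN N) \<le> 3 ^ N"
  unfolding card_len[symmetric] by (rule card_mono[OF finite_len]) (auto simp: DYN_def)

lemma h_le: "h n m \<le> 9 ^ n"
proof -
  have "h n m \<le> card (DYN (2*n))" unfolding h_alt by (rule card_mono[OF finite_DYN]) auto
  also have "\<dots> \<le> 3 ^ (2*n)" by (rule card_DYN)
  finally show ?thesis by (simp add: power_mult)
qed

lemma h_zero: "2*n < m \<Longrightarrow> h n m = 0"
proof -
  assume a: "2*n < m"
  have "{P \<in> DYN (2*n). 1 \<le> m \<and> m \<le> pos P} = {}"
  proof (rule ccontr)
    assume "{P \<in> DYN (2*n). 1 \<le> m \<and> m \<le> pos P} \<noteq> {}"
    then obtain P where "P \<in> DYN (2*n)" "m \<le> pos P" by auto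
    then show False using a pos_le[of P "2*n"] by linarith
  qed
  then show ?thesis unfolding h_alt by (simp only: card.empty)
qed

lemma three_pow: "2 * n + 1 \<le> 3 ^ n"
  by (induction n) auto

lemma BF_bound: "0 \<le> y \<Longrightarrow> y \<le> 1 \<Longrightarrow> 0 \<le> BF y $ n \<and> BF y $ n \<le> (9::real) ^ n"
proof -
  assume y: "0 \<le> y" "y \<le> 1"
  have "BF y $ n = (\<Sum>P\<in>DYN (2*n). y ^ pos P)" by (simp add: BF_def)
  moreover have c1: "(\<Sum>P\<in>DYN (2*n). y ^ pos P) \<le> (\<Sum>P\<in>DYN (2*n). 1)"
    using y by (intro sum_mono) (simp add: power_le_one)
  moreover have c2: "(\<Sum>P\<in>DYN (2*n). 1) \<le> (9::real) ^ n"
  proof -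
    have "card (DYN (2*n)) \<le> 9 ^ n" using card_DYN[of "2*n"] by (simp add: power_mult)
    then have "real (card (DYN (2*n))) \<le> real (9 ^ n)" by (simp only: of_nat_le_iff)
    then show ?thesis by simp
  qed
  moreover have "(\<Sum>P\<in>DYN (2*n). y ^ pos P) \<le> 9 ^ n" using c1 c2 by (rule order.trans)
  moreover have "0 \<le> (\<Sum>P\<in>DYN (2*n). y ^ pos P)" using y by (intro sum_nonneg) simp
  ultimately show ?thesis by simp
qed

lemma Fg_bound: "0 \<le> x \<Longrightarrow> x \<le> 1 \<Longrightarrow> 0 \<le> Fg x $ n \<and> Fg x $ n \<le> (27::real) ^ n"
proof -
  assume x: "0 \<le> x" "x \<le> 1"
  have "Fg x $ n = (\<Sum>m\<le>2*n. real (h n m) * x ^ m)" by (simp add: Fg_def)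
  moreover have "(\<Sum>m\<le>2*n. real (h n m) * x ^ m) \<le> (\<Sum>m\<le>2*n. 9 ^ n)"
  proof (intro sum_mono)
    fix m
    have "real (h n m) \<le> real (9 ^ n)" using h_le[of n m] by (simp only: of_nat_le_iff)
    then have a: "real (h n m) \<le> 9 ^ n" by simp
    have "x ^ m \<le> 1" using x by (simp add: power_le_one)
    then have "real (h n m) * x ^ m \<le> real (h n m)" by (intro mult_left_le) auto
    then show "real (h n m) * x ^ m \<le> 9 ^ n" using a by linarith
  qed
  moreover have "(\<Sum>m\<le>2*n. (9::real) ^ n) \<le> 27 ^ n"
  proof -
    have "(\<Sum>m\<le>2*n. (9::real) ^ n) = real (2*n+1) * 9 ^ n" by simp
    also have "\<dots> \<le> 3 ^ n * 9 ^ n"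
    proof (intro mult_right_mono)
      have "real (2*n+1) \<le> real (3 ^ n)" using three_pow[of n] by (simp only: of_nat_le_iff)
      then show "real (2*n+1) \<le> 3 ^ n" by simp
    qed simp
    also have "\<dots> = 27 ^ n" by (simp add: power_mult_distrib[symmetric])
    finally show ?thesis .
  qed
  moreover have "0 \<le> (\<Sum>m\<le>2*n. real (h n m) * x ^ m)" using x by (intro sum_nonneg) simp
  ultimately show ?thesis by linarith
qed

lemmas RR_simps = RR_mult RR_add RR_diff RR_power RR_const RR_1 RR_numeral RR_X

theorem part2:
  "\<exists>\<epsilon>>0. \<forall>t x::real. 0 < t \<and> t < \<epsilon> \<and> 0 < x \<and> x < 1 \<longrightarrow>
            ((\<lambda>(n, m). real (h n m) * t ^ n * x ^ m) has_sum H_closed t x) UNIV"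
proof (intro exI[of _ "1/30"] conjI allI impI)
  fix t x :: real
  assume tx: "0 < t \<and> t < 1/30 \<and> 0 < x \<and> x < 1"
  then have t: "0 < t" "t < 1/30" and x: "0 < x" "x < 1" by auto
  have ta: "\<bar>t\<bar> < 1/28" using t by simp
  have cb: "0 \<le> (bF :: real fps) $ n \<and> (bF :: real fps) $ n \<le> 9 ^ n" for n
  proof -
    have "real (cat n) \<le> real (9 ^ n)" using cat_le[of n] by (simp only: of_nat_le_iff)
    then show ?thesis by (simp add: bF_def)
  qed
  have ab: "0 \<le> aF x $ n \<and> aF x $ n \<le> 9 ^ n" for n
  proof -
    have "(x^2)^n \<le> 1" using x by (simp add: power_le_one)
    then have "(x^2)^n * bF $ n \<le> 1 * bF $ n" using cb[of n] by (intro mult_right_mono) auto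
    then show ?thesis using cb[of n] by (simp add: aF_def)
  qed
  have R27: "\<bar>f $ n\<bar> \<le> 27 ^ n" if "0 \<le> f $ n \<and> f $ n \<le> 9 ^ n" for f :: "real fps" and n
  proof -
    have "(9::real) ^ n \<le> 27 ^ n" by (rule power_mono) auto
    then show ?thesis using that by auto
  qed
  have Rb: "RR (bF :: real fps)" by (rule RR_bound, rule R27, rule cb)
  have Ra: "RR (aF x)" by (rule RR_bound, rule R27, rule ab)
  have RB1: "RR (BF (1::real))" by (rule RR_bound, rule R27, rule BF_bound) auto
  have RBx: "RR (BF x)" using x by (intro RR_bound R27 BF_bound) auto
  have RF: "RR (Fg x)" using x by (intro RR_bound) (use Fg_bound[of x] in auto)
  define c where "c = eval_fps bF t"
  define al where "al = eval_fps (aF x) t"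
  define A where "A = eval_fps (BF 1) t"
  define B where "B = eval_fps (BF x) t"
  define F where "F = eval_fps (Fg x) t"
  note ev = ev_add[OF _ _ ta] ev_mult[OF _ _ ta] ev_diff[OF _ _ ta] ev_power[OF _ ta]
  have ceq: "c = 1 + t * c^2"
  proof -
    have "eval_fps bF t = eval_fps (1 + fps_X * bF ^ 2) t" using bF_eq by (rule arg_cong)
    then show ?thesis unfolding c_def by (simp add: ev RR_simps Rb)
  qed
  have aleq: "al = 1 + x^2 * t * al^2"
  proof -
    have "eval_fps (aF x) t = eval_fps (1 + fps_const (x^2) * fps_X * (aF x)^2) t" using aF_eq by (rule arg_cong)
    then show ?thesis unfolding al_def by (simp add: ev RR_simps Ra)
  qed
  have Aeq: "(1 - 2*t*c) * A = t * c^2"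
  proof -
    have "eval_fps ((1 - 2 * fps_X * bF) * BF 1) t = eval_fps (fps_X * (bF :: real fps)^2) t" using A_eq by (rule arg_cong)
    then show ?thesis unfolding c_def A_def by (simp add: ev RR_simps Rb RB1)
  qed
  have Beq: "(1 - x*t*al*c) * B = x*t*al*c*c"
  proof -
    have "eval_fps ((1 - wF x) * BF x) t = eval_fps (wF x * bF) t" using BF_eq by (rule arg_cong)
    then show ?thesis unfolding c_def B_def al_def wF_def by (simp add: ev RR_simps Rb RBx Ra)
  qed
  have Feq: "(1 - x) * F = x * (A - B)"
  proof -
    have "eval_fps (fps_const (1 - x) * Fg x) t = eval_fps (fps_const x * (BF 1 - BF x)) t" using Fg_eq by (rule arg_cong)
    then show ?thesis unfolding F_def A_def B_def by (simp add: ev RR_simps RF RBx RB1)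
  qed
  have cbd: "0 \<le> c \<and> c \<le> 2" unfolding c_def using t by (intro ev_bound cb) auto
  have abd: "0 \<le> al \<and> al \<le> 2" unfolding al_def using t by (intro ev_bound ab) auto
  have FH: "F = H_closed t x"
    by (rule real_alg[OF t x _ _ _ _ ceq aleq Aeq Beq Feq]) (use cbd abd in auto)
  define g where "g n = Fg x $ n * t ^ n" for n
  have g0: "0 \<le> g n" for n using Fg_bound[of x n] x t unfolding g_def by simp
  have gs: "(g has_sum F) UNIV"
    unfolding g_def F_def
    by (rule sums_nonneg_imp_has_sum[OF sums_eval_fps[OF RR_lt[OF RF ta]]]) (use g0 in \<open>simp add: g_def\<close>)
  define ff where "ff = (\<lambda>(n, m). real (h n m) * t ^ n * x ^ m)"
  have inner: "((\<lambda>m. ff (n, m)) has_sum g n) UNIV" for n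
  proof -
    have "((\<lambda>m. ff (n, m)) has_sum g n) UNIV \<longleftrightarrow> ((\<lambda>m. ff (n, m)) has_sum g n) {..2*n}"
      by (rule has_sum_cong_neutral) (auto simp: ff_def h_zero)
    moreover have "g n = (\<Sum>m\<le>2*n. ff (n, m))"
      by (simp add: g_def ff_def Fg_def sum_distrib_right sum_distrib_left algebra_simps)
    ultimately show ?thesis by simp
  qed
  have ff0: "0 \<le> ff p" for p using t x by (cases p) (auto simp: ff_def)
  have "(\<lambda>p. norm (ff p)) summable_on Sigma UNIV (\<lambda>_. UNIV)"
  proof (subst Infinite_Sum.abs_summable_on_Sigma_iff, intro conjI ballI)
    fix n :: nat
    show "(\<lambda>m. norm (ff (n, m))) summable_on UNIV"
      using inner[of n] ff0 by (auto simp: summable_on_def)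
  next
    have "infsum (\<lambda>m. norm (ff (n, m))) UNIV = g n" for n
      using inner[of n] ff0 by (simp add: infsumI)
    then show "(\<lambda>n. norm (infsum (\<lambda>m. norm (ff (n, m))) UNIV)) summable_on UNIV"
      using gs g0 by (auto simp: summable_on_def)
  qed
  then have "ff summable_on Sigma UNIV (\<lambda>_. UNIV)" by (rule abs_summable_summable)
  then have "(ff has_sum F) (Sigma UNIV (\<lambda>_. UNIV :: nat set))"
    by (intro has_sum_SigmaI[OF inner gs])
  then show "((\<lambda>(n, m). real (h n m) * t ^ n * x ^ m) has_sum H_closed t x) UNIV"
    by (simp add: ff_def FH)
qed simp

type_synonym K = "rat poly poly"

definition uK :: K where "uK = [:1, -4:]"
definition vK :: K where "vK = [:1, [:0, 0, -4:]:]"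

lemma degree_uK: "degree uK = 1" by (simp add: uK_def)
lemma degree_vK: "degree vK = 1" by (simp add: vK_def)
lemma uK_nz: "uK \<noteq> 0" by (simp add: uK_def)
lemma vK_nz: "vK \<noteq> 0" by (simp add: vK_def)

lemma sq_parity:
  fixes p q w :: "'a::idom poly"
  assumes "p^2 = q^2 * w" "degree w = 1"
  shows "q = 0"
proof (rule ccontr)
  assume q: "q \<noteq> 0"
  have w: "w \<noteq> 0" using assms(2) by auto
  then have "q^2 * w \<noteq> 0" using q by simp
  then have p: "p \<noteq> 0" using assms(1) by auto
  have "degree (p^2) = 2 * degree p" using p by (simp add: degree_power_eq)
  moreover have "degree (q^2 * w) = 2 * degree q + 1" using q w assms(2)
    by (simp add: degree_mult_eq degree_power_eq)
  moreover have "degree (p^2) = degree (q^2 * w)" using assms(1) by simp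
  ultimately show False by presburger
qed

lemma order_sq:
  fixes A C W :: "'a::idom poly"
  assumes "A^2 = C^2 * W" "C \<noteq> 0" "W \<noteq> 0" "order z W = 1"
  shows False
proof -
  have "C^2 * W \<noteq> 0" using assms by simp
  then have A: "A \<noteq> 0" using assms(1) by auto
  have "order z (A^2) = 2 * order z A" using A by (simp add: power2_eq_square order_mult)
  moreover have "order z (C^2 * W) = 2 * order z C + 1" using assms
    by (simp add: power2_eq_square order_mult)
  moreover have "order z (A^2) = order z (C^2 * W)" using assms(1) by simp
  ultimately show False by presburger
qed

definition sz :: "'a::zero poly \<Rightarrow> nat" where "sz p = (if p = 0 then 0 else degree p + 1)"

lemma sz_mult_uK: "sz (uK * a) = (if a = 0 then 0 else sz a + 1)"
  using uK_nz by (simp add: sz_def degree_mult_eq degree_uK)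

lemma W_order: "order 1 [:1, 0, -1::rat:] = 1"
proof -
  have e: "[:1, 0, -1::rat:] = [:-1, 1:] * [:-1, -1:]" by simp
  have "order 1 [:-1, 1::rat:] = 1" using order_power_n_n[of "1::rat" 1] by simp
  moreover have "order 1 [:-1, -1::rat:] = 0" by (rule order_0I) simp
  ultimately show ?thesis unfolding e by (subst order_mult) auto
qed

lemma ev14_uK: "poly uK [:1/4:] = 0"
  by (simp add: uK_def numeral_poly one_pCons)

lemma ev14_vK: "poly vK [:1/4:] = [:1, 0, -1:]"
  by (simp add: vK_def numeral_poly one_pCons)

lemma uK_dvd: "poly a [:1/4:] = 0 \<Longrightarrow> \<exists>a1. a = uK * a1"
proof -
  assume "poly a [:1/4:] = 0"
  then obtain q where q: "a = [:- [:1/4:], 1:] * q" by (auto simp: poly_eq_0_iff_dvd)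
  have "[:- [:1/4:], 1:] = uK * [:[:-1/4:]:]" by (simp add: uK_def numeral_poly one_pCons)
  then show ?thesis using q by (metis mult.assoc)
qed

lemma descent:
  fixes a b c d :: K
  shows "a^2 + b^2 * uK = (c^2 + d^2 * uK) * vK \<Longrightarrow> a * b = c * d * vK \<Longrightarrow> a = 0 \<and> b = 0 \<and> c = 0 \<and> d = 0"
proof (induction "sz a + sz b + sz c + sz d" arbitrary: a b c d rule: less_induct)
  case less
  note e1 = less.prems(1) and e2 = less.prems(2)
  show ?case
  proof (cases "a = 0 \<and> c = 0")
    case True
    then have "b^2 * uK = (d^2 * vK) * uK" using e1 by (simp add: algebra_simps)
    then have "b^2 = d^2 * vK" using uK_nz by simp
    then have d: "d = 0" using degree_vK by (rule sq_parity)
    then have "b = 0" using \<open>b^2 = d^2 * vK\<close> by simp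
    then show ?thesis using True d by simp
  next
    case False
    let ?A = "poly a [:1/4:]" and ?C = "poly c [:1/4:]"
    have "poly (a^2 + b^2 * uK) [:1/4:] = poly ((c^2 + d^2 * uK) * vK) [:1/4:]" using e1 by simp
    then have AC: "?A^2 = ?C^2 * [:1, 0, -1:]" by (simp add: ev14_uK ev14_vK)
    have C0: "?C = 0"
    proof (rule ccontr)
      assume "?C \<noteq> 0"
      then show False using order_sq[OF AC _ _ W_order] by simp
    qed
    then have A0: "?A = 0" using AC by simp
    obtain a1 where a1: "a = uK * a1" using uK_dvd[OF A0] by blast
    obtain c1 where c1: "c = uK * c1" using uK_dvd[OF C0] by blast
    have "uK * (b^2 + a1^2 * uK) = uK * ((d^2 + c1^2 * uK) * vK)"
      using e1 unfolding a1 c1 by (simp add: algebra_simps power2_eq_square)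
    then have f1: "b^2 + a1^2 * uK = (d^2 + c1^2 * uK) * vK" using uK_nz by simp
    have "uK * (b * a1) = uK * (d * c1 * vK)"
      using e2 unfolding a1 c1 by (simp add: algebra_simps)
    then have f2: "b * a1 = d * c1 * vK" using uK_nz by simp
    have lt: "sz b + sz a1 + sz d + sz c1 < sz a + sz b + sz c + sz d"
      using False unfolding a1 c1 sz_mult_uK by (auto simp: sz_def)
    from less.hyps[OF lt f1 f2] have "b = 0" "a1 = 0" "d = 0" "c1 = 0" by auto
    then show ?thesis using a1 c1 by simp
  qed
qed

abbreviation E :: "K \<Rightarrow> rat poly fps" where "E \<equiv> fps_of_poly"

definition px :: "rat poly" where "px = [:0, 1:]"
definition xx :: "rat poly fps" where "xx = fps_const px"
definition sF :: "rat poly fps" where "sF = 1 - 2 * fps_X * bF"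
definition rF :: "rat poly fps" where "rF = 1 - 2 * xx^2 * fps_X * aF px"

lemma E_uK: "E uK = 1 - 4 * fps_X"
  by (simp add: uK_def fps_of_poly_pCons fps_numeral_fps_const[symmetric] algebra_simps)

lemma const_m4: "fps_const [:0, 0, -4:] = -4 * xx^2"
proof -
  have "[:0, 0, -4::rat:] = -4 * px^2" by (simp add: px_def numeral_poly power2_eq_square)
  then show ?thesis by (simp add: xx_def fps_numeral_fps_const)
qed

lemma E_vK: "E vK = 1 - 4 * xx^2 * fps_X"
  by (simp add: vK_def fps_of_poly_pCons const_m4 algebra_simps)

lemma sF_sq: "sF * sF = E uK"
proof -
  have b: "fps_X * bF^2 = (bF :: rat poly fps) - 1" using bF_eq by (metis add_diff_cancel_left')
  have "sF * sF = 1 - 4 * fps_X * bF + 4 * fps_X * (fps_X * bF^2)"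
    by (simp add: sF_def algebra_simps power2_eq_square)
  also have "\<dots> = 1 - 4 * fps_X" unfolding b by (simp add: algebra_simps)
  finally show ?thesis by (simp add: E_uK)
qed

lemma rF_sq: "rF * rF = E vK"
proof -
  have a: "fps_const (px^2) * fps_X * (aF px)^2 = aF px - 1" using aF_eq[of px] by (metis add_diff_cancel_left')
  have "rF * rF = 1 - 4 * xx^2 * fps_X * aF px + 4 * xx^2 * fps_X * (fps_const (px^2) * fps_X * (aF px)^2)"
    by (simp add: rF_def xx_def algebra_simps power2_eq_square)
  also have "\<dots> = 1 - 4 * xx^2 * fps_X" unfolding a by (simp add: algebra_simps)
  finally show ?thesis by (simp add: E_vK)
qed

lemma E_eq0: "E p = 0 \<longleftrightarrow> p = 0"
  using fps_of_poly_eq_iff[of p 0] by simp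

lemma indep1:
  assumes "E p + E q * sF = 0"
  shows "p = 0 \<and> q = 0"
proof -
  have "E p = - (E q * sF)" using assms by (simp add: eq_neg_iff_add_eq_0)
  then have "E p * E p = E q * E q * (sF * sF)" by (simp add: algebra_simps)
  then have "E (p^2) = E (q^2 * uK)" by (simp add: sF_sq fps_of_poly_mult power2_eq_square)
  then have "p^2 = q^2 * uK" by (simp add: fps_of_poly_eq_iff)
  then have q: "q = 0" using degree_uK by (rule sq_parity)
  then show ?thesis using assms by (simp add: E_eq0)
qed

lemma indep:
  assumes "E a0 + E a1 * sF + E a2 * rF + E a3 * sF * rF = 0"
  shows "a0 = 0 \<and> a1 = 0 \<and> a2 = 0 \<and> a3 = 0"
proof -
  define P0 where "P0 = E a0 + E a1 * sF"
  define P1 where "P1 = E a2 + E a3 * sF"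
  have "P0 = - (P1 * rF)" using assms by (simp add: P0_def P1_def algebra_simps eq_neg_iff_add_eq_0)
  then have h: "P0 * P0 = P1 * P1 * (rF * rF)" by (simp add: algebra_simps)
  have "P0 * P0 = E a0 * E a0 + E a1 * E a1 * (sF * sF) + 2 * E a0 * E a1 * sF"
    by (simp add: P0_def algebra_simps)
  also have "\<dots> = E (a0^2 + a1^2 * uK) + E (2 * a0 * a1) * sF"
    by (simp add: sF_sq fps_of_poly_mult fps_of_poly_add power2_eq_square)
  finally have h0: "P0 * P0 = E (a0^2 + a1^2 * uK) + E (2 * a0 * a1) * sF" .
  have "P1 * P1 * (rF * rF) = (E a2 * E a2 + E a3 * E a3 * (sF * sF) + 2 * E a2 * E a3 * sF) * E vK"
    by (simp add: P1_def rF_sq algebra_simps)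
  also have "\<dots> = E ((a2^2 + a3^2 * uK) * vK) + E (2 * a2 * a3 * vK) * sF"
    by (simp add: sF_sq fps_of_poly_mult fps_of_poly_add power2_eq_square algebra_simps)
  finally have h1: "P1 * P1 * (rF * rF) = E ((a2^2 + a3^2 * uK) * vK) + E (2 * a2 * a3 * vK) * sF" .
  have "E (a0^2 + a1^2 * uK - (a2^2 + a3^2 * uK) * vK) + E (2 * a0 * a1 - 2 * a2 * a3 * vK) * sF = 0"
    using h h0 h1 by (simp add: fps_of_poly_diff algebra_simps)
  then have z: "a0^2 + a1^2 * uK - (a2^2 + a3^2 * uK) * vK = 0" "2 * a0 * a1 - 2 * a2 * a3 * vK = 0"
    using indep1 by blast+
  from z(1) have e1: "a0^2 + a1^2 * uK = (a2^2 + a3^2 * uK) * vK" by simp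
  from z(2) have "2 * (a0 * a1) = 2 * (a2 * a3 * vK)" by (simp add: algebra_simps)
  then have e2: "a0 * a1 = a2 * a3 * vK" by simp
  show ?thesis using descent[OF e1 e2] by simp
qed

datatype 'a quad = Qd 'a 'a 'a 'a

fun qmul :: "'a::comm_ring_1 \<Rightarrow> 'a \<Rightarrow> 'a quad \<Rightarrow> 'a quad \<Rightarrow> 'a quad" where
  "qmul u v (Qd a0 a1 a2 a3) (Qd b0 b1 b2 b3) =
     Qd (a0 * b0 + a1 * b1 * u + a2 * b2 * v + a3 * b3 * u* v)
       (a0 * b1 + a1 * b0 + (a2 * b3 + a3 * b2)* v)
       (a0 * b2 + a2 * b0 + (a1 * b3 + a3 * b1)* u)
       (a0 * b3 + a3 * b0 + a1 * b2 + a2 * b1)"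

fun qadd :: "'a::comm_ring_1 quad \<Rightarrow> 'a quad \<Rightarrow> 'a quad" where
  "qadd (Qd a0 a1 a2 a3) (Qd b0 b1 b2 b3) = Qd (a0+b0) (a1+b1) (a2+b2) (a3+b3)"

fun qsub :: "'a::comm_ring_1 quad \<Rightarrow> 'a quad \<Rightarrow> 'a quad" where
  "qsub (Qd a0 a1 a2 a3) (Qd b0 b1 b2 b3) = Qd (a0-b0) (a1-b1) (a2-b2) (a3-b3)"

definition qc :: "'a::comm_ring_1 \<Rightarrow> 'a quad" where "qc c = Qd c 0 0 0"
definition qS :: "'a::comm_ring_1 quad" where "qS = Qd 0 1 0 0"
definition qR :: "'a::comm_ring_1 quad" where "qR = Qd 0 0 1 0"

fun sg1 :: "'a::comm_ring_1 quad \<Rightarrow> 'a quad" where "sg1 (Qd a0 a1 a2 a3) = Qd a0 (-a1) a2 (-a3)"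
fun sg2 :: "'a::comm_ring_1 quad \<Rightarrow> 'a quad" where "sg2 (Qd a0 a1 a2 a3) = Qd a0 a1 (-a2) (-a3)"

fun qmap :: "('a \<Rightarrow> 'b) \<Rightarrow> 'a quad \<Rightarrow> 'b quad" where
  "qmap f (Qd a0 a1 a2 a3) = Qd (f a0) (f a1) (f a2) (f a3)"

fun qev :: "('a \<Rightarrow> 'b::comm_ring_1) \<Rightarrow> 'b \<Rightarrow> 'b \<Rightarrow> 'a quad \<Rightarrow> 'b" where
  "qev f S R (Qd a0 a1 a2 a3) = f a0 + f a1 * S + f a2 * R + f a3 * S * R"

locale rhom =
  fixes f :: "'a::comm_ring_1 \<Rightarrow> 'b::comm_ring_1"
  assumes f_add: "f (x + y) = f x + f y" and f_mult: "f (x * y) = f x * f y"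
    and f_1: "f 1 = 1"
begin

lemma f_0: "f 0 = 0"
  using f_add[of 0 0] by simp

lemma f_minus: "f (- x) = - f x"
  using f_add[of x "-x"] f_0 by (simp add: eq_neg_iff_add_eq_0 add.commute)

lemma f_diff: "f (x - y) = f x - f y"
  using f_add[of x "-y"] f_minus by simp

lemma qev_mult:
  assumes "S * S = f u" "R * R = f v"
  shows "qev f S R (qmul u v p q) = qev f S R p * qev f S R q"
proof (cases p; cases q)
  fix a0 a1 a2 a3 b0 b1 b2 b3
  assume pq: "p = Qd a0 a1 a2 a3" "q = Qd b0 b1 b2 b3"
  show ?thesis unfolding pq
    by (simp add: f_add f_mult assms[symmetric]) (simp add: algebra_simps)
qed

lemma qev_add: "qev f S R (qadd p q) = qev f S R p + qev f S R q"
  by (cases p; cases q) (simp add: f_add algebra_simps)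

lemma qev_sub: "qev f S R (qsub p q) = qev f S R p - qev f S R q"
  by (cases p; cases q) (simp add: f_diff algebra_simps)

lemma qev_qc: "qev f S R (qc c) = f c"
  by (simp add: qc_def f_0)

lemma qev_qS: "qev f S R qS = S"
  by (simp add: qS_def f_0 f_1)

lemma qev_qR: "qev f S R qR = R"
  by (simp add: qR_def f_0 f_1)

lemma qev_sg1: "qev f S R (sg1 p) = qev f (-S) R p"
  by (cases p) (simp add: f_minus)

lemma qev_sg2: "qev f S R (sg2 p) = qev f S (-R) p"
  by (cases p) (simp add: f_minus)

lemma qmap_mult: "qmap f (qmul u v p q) = qmul (f u) (f v) (qmap f p) (qmap f q)"
  by (cases p; cases q) (simp add: f_add f_mult)

lemma qmap_add: "qmap f (qadd p q) = qadd (qmap f p) (qmap f q)"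
  by (cases p; cases q) (simp add: f_add)

lemma qmap_sub: "qmap f (qsub p q) = qsub (qmap f p) (qmap f q)"
  by (cases p; cases q) (simp add: f_diff)

lemma qmap_qc: "qmap f (qc c) = qc (f c)"
  by (simp add: qc_def f_0)

lemma qmap_qS: "qmap f qS = qS"
  by (simp add: qS_def f_0 f_1)

lemma qmap_qR: "qmap f qR = qR"
  by (simp add: qR_def f_0 f_1)

lemma qmap_sg1: "qmap f (sg1 p) = sg1 (qmap f p)"
  by (cases p) (simp add: f_minus)

lemma qmap_sg2: "qmap f (sg2 p) = sg2 (qmap f p)"
  by (cases p) (simp add: f_minus)

end

interpretation EH: rhom "fps_of_poly :: K \<Rightarrow> rat poly fps"
  by unfold_locales (simp_all add: fps_of_poly_add fps_of_poly_mult)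

definition phi :: "K \<Rightarrow> rat" where "phi p = poly (poly p [:1:]) 2"

interpretation PH: rhom phi
  by unfold_locales (simp_all add: phi_def)

definition tK :: K where "tK = [:0, 1:]"
definition xK :: K where "xK = [:px:]"

lemma E_tK: "E tK = fps_X" by (simp add: tK_def)
lemma E_xK: "E xK = xx" by (simp add: xK_def xx_def fps_of_poly_const)
lemma phi_tK: "phi tK = 1" by (simp add: tK_def phi_def)
lemma phi_xK: "phi xK = 2" by (simp add: xK_def phi_def px_def)
lemma phi_uK: "phi uK = -3" by (simp add: uK_def phi_def)
lemma phi_vK: "phi vK = -15" by (simp add: vK_def phi_def)

lemma H_Fg: "H_fps = Fg px"
proof (rule fps_ext)
  fix n
  have "monom (of_nat (h n m)) m = of_nat (h n m) * px ^ m" for m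
    by (simp add: monom_altdef px_def of_nat_poly)
  then show "H_fps $ n = Fg px $ n" by (simp add: H_fps_def Fg_def)
qed

definition DF :: "rat poly fps" where
  "DF = 4 * fps_X * (1 - xx) * sF * (4 * fps_X * xx - (1 - rF) * (1 - sF))"
definition EF :: "rat poly fps" where
  "EF = xx * (1 - sF) * (1 - sF) * (4 * fps_X * xx - (1 - rF) * (1 - sF) - 2 * sF * (1 - rF))"

lemma DF_EF: "DF * H_fps = EF"
proof -
  let ?b = "bF :: rat poly fps" and ?a = "aF px" and ?w = "wF px" and ?A = "BF (1::rat poly)" and ?B = "BF px"
  have c1: "fps_const (1 - px) = 1 - fps_const px" by (metis fps_const_1_eq_1 fps_const_sub)
  have F: "(1 - xx) * H_fps = xx * (?A - ?B)" using Fg_eq[of px] by (simp add: H_Fg xx_def c1)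
  have A: "sF * ?A = fps_X * ?b^2" using A_eq by (simp add: sF_def)
  have B: "(1 - ?w) * ?B = ?w * ?b" by (rule BF_eq)
  have w: "?w = xx * fps_X * ?a * ?b" by (simp add: wF_def xx_def)
  have dfe: "DF = 16 * fps_X^2 * xx * sF * (1 - ?w)* (1 - xx)"
    by (simp add: DF_def w sF_def rF_def algebra_simps power2_eq_square)
  have "DF * H_fps = 16 * fps_X^2 * xx * sF * (1 - ?w) * ((1 - xx) * H_fps)"
    unfolding dfe by (simp only: mult.assoc)
  also have "\<dots> = 16 * fps_X^2 * xx^2 * ((1 - ?w) * (sF * ?A) - sF * ((1 - ?w) * ?B))"
    unfolding F by (simp add: algebra_simps power2_eq_square)
  also have "\<dots> = 16 * fps_X^2 * xx^2 * ((1 - ?w) * (fps_X * ?b^2) - sF * (?w * ?b))"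
    unfolding A B ..
  also have "\<dots> = EF"
    by (simp add: EF_def w sF_def rF_def algebra_simps power2_eq_square)
  finally show ?thesis .
qed

abbreviation qm where "qm \<equiv> qmul uK vK"

definition qDB :: "K quad" where "qDB = qsub (qc (4 * tK * xK)) (qm (qsub (qc 1) qR) (qsub (qc 1) qS))"
definition qD :: "K quad" where "qD = qm (qm (qc (4 * tK * (1 - xK))) qS) qDB"
definition qE :: "K quad" where
  "qE = qm (qm (qm (qc xK) (qsub (qc 1) qS)) (qsub (qc 1) qS)) (qsub qDB (qm (qm (qc 2) qS) (qsub (qc 1) qR)))"

lemmas EH_simps = EH.qev_mult[OF sF_sq rF_sq] EH.qev_add EH.qev_sub EH.qev_qc EH.qev_qS EH.qev_qR

lemma ev_qD: "qev E sF rF qD = DF"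
  by (simp add: qD_def qDB_def DF_def EH_simps fps_of_poly_mult fps_of_poly_diff E_tK E_xK algebra_simps)

lemma ev_qE: "qev E sF rF qE = EF"
  by (simp add: qE_def qDB_def EF_def EH_simps fps_of_poly_mult fps_of_poly_diff E_tK E_xK algebra_simps)

fun q0 :: "'a quad \<Rightarrow> 'a" where "q0 (Qd a _ _ _) = a"
fun q1 :: "'a quad \<Rightarrow> 'a" where "q1 (Qd _ a _ _) = a"
fun q2 :: "'a quad \<Rightarrow> 'a" where "q2 (Qd _ _ a _) = a"
fun q3 :: "'a quad \<Rightarrow> 'a" where "q3 (Qd _ _ _ a) = a"

lemma quad_eta: "p = Qd (q0 p) (q1 p) (q2 p) (q3 p)"
  by (cases p) simp

lemma qmul_sg1: "q1 (qmul u v p (sg1 p)) = 0 \<and> q3 (qmul u v p (sg1 p)) = 0"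
  by (cases p) (auto simp: algebra_simps)

lemma qmul_sg2: "qmul u v (sg2 (Qd m0 0 m2 0)) (Qd m0 0 m2 0) = Qd (m0 * m0 - m2 * m2 * v) 0 0 0"
  by (simp add: algebra_simps)

definition qM :: "K quad" where "qM = qm qD (sg1 qD)"
definition qH :: "K quad" where "qH = qm (qm (sg2 qM) (sg1 qD)) qE"
definition NN :: K where "NN = q0 qM * q0 qM - q2 qM * q2 qM * vK"

lemma qM_form: "qM = Qd (q0 qM) 0 (q2 qM) 0"
  using quad_eta[of qM] qmul_sg1[of uK vK qD] by (simp add: qM_def)

lemma qN: "qm (sg2 qM) qM = Qd NN 0 0 0"
  by (subst (1 2) qM_form) (simp only: qmul_sg2 NN_def)

lemma phi_numeral[simp]: "phi (numeral n) = numeral n"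
  by (simp add: phi_def numeral_poly)

lemmas PH_simps = PH.qmap_mult PH.qmap_add PH.qmap_sub PH.qmap_qc PH.qmap_qS PH.qmap_qR PH.qmap_sg1 PH.qmap_sg2
   PH.f_mult PH.f_add PH.f_diff PH.f_1 PH.f_minus phi_tK phi_xK phi_uK phi_vK

lemma num_qD: "qmap phi qD = Qd 12 (-28) (-12) (-4)"
  by (simp add: qD_def qDB_def PH_simps qc_def qS_def qR_def)

lemma num_qE: "qmap phi qE = Qd (-40) (-24) 8 (-8)"
  by (simp add: qE_def qDB_def PH_simps qc_def qS_def qR_def)

lemma num_qM: "qmap phi qM = Qd (-384) 0 384 0"
  by (simp add: qM_def PH_simps num_qD)

lemma num_qH: "qmap phi qH = Qd 8257536 2752512 (-1179648) 1179648"
  by (simp add: qH_def PH_simps num_qD num_qE num_qM)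

lemma NN_nz: "NN \<noteq> 0"
proof -
  have "qmap phi (qm (sg2 qM) qM) = Qd 2359296 0 0 0" by (simp add: PH_simps num_qM)
  then have "phi NN \<noteq> 0" unfolding qN by simp
  then show ?thesis using PH.f_0 by auto
qed

lemma qH_nz: "q1 qH \<noteq> 0" "q2 qH \<noteq> 0" "q3 qH \<noteq> 0"
proof -
  have "phi (q1 qH) \<noteq> 0" "phi (q2 qH) \<noteq> 0" "phi (q3 qH) \<noteq> 0"
    using num_qH by (subst (asm) (1) quad_eta[of qH], simp)+
  then show "q1 qH \<noteq> 0" "q2 qH \<noteq> 0" "q3 qH \<noteq> 0" using PH.f_0 by auto
qed

lemma ev_qH: "qev E sF rF qH = E NN * H_fps"
proof -
  have "qev E sF rF qH = qev E sF rF (sg2 qM) * qev E sF rF (sg1 qD) * EF"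
    by (simp add: qH_def EH_simps ev_qE)
  also have "\<dots> = qev E sF rF (sg2 qM) * (qev E sF rF qD * qev E sF rF (sg1 qD)) * H_fps"
    by (simp add: ev_qD DF_EF[symmetric] algebra_simps)
  also have "\<dots> = qev E sF rF (qm (sg2 qM) qM) * H_fps"
    by (simp add: qM_def EH_simps)
  also have "\<dots> = E NN * H_fps"
    by (simp add: qN)
  finally show ?thesis .
qed

lemma mapE_add: "map_poly E (p + q) = map_poly E p + map_poly E q"
  by (rule poly_eqI) (simp add: coeff_map_poly fps_of_poly_add)

lemma mapE_diff: "map_poly E (p - q) = map_poly E p - map_poly E q"
  by (rule poly_eqI) (simp add: coeff_map_poly fps_of_poly_diff)

lemma mapE_mult: "map_poly E (p * q) = map_poly E p * map_poly E q"
  by (rule poly_eqI) (simp add: coeff_map_poly coeff_mult fps_of_poly_sum fps_of_poly_mult)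

lemma mapE_power: "map_poly E (p ^ n) = map_poly E p ^ n"
  by (induction n) (simp_all add: mapE_mult)

lemma mapE_pCons: "map_poly E (pCons c p) = pCons (E c) (map_poly E p)"
  by (rule map_poly_pCons) simp

lemma mapE_smult: "map_poly E (smult c p) = smult (E c) (map_poly E p)"
  by (rule map_poly_smult) (simp_all add: fps_of_poly_mult)

definition al :: K where "al = q0 qH"
definition be :: K where "be = q1 qH"
definition ga :: K where "ga = q2 qH"
definition de :: K where "de = q3 qH"

definition LL :: "K poly" where "LL = [:-al, NN:]"
definition GG :: "K poly" where "GG = LL^2 + [:ga * ga * vK - uK * be * be - uK * de * de * vK:]"
definition KK :: "K poly" where "KK = smult (2 * ga) LL + [:2 * uK * be * de:]"
definition PP :: "K poly" where "PP = GG^2 - [:vK:] * KK^2"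

lemma NH: "E NN * H_fps = E al + E be * sF + E ga * rF + E de * sF * rF"
  using ev_qH quad_eta[of qH] by (metis qev.simps al_def be_def ga_def de_def)

lemma GK: "poly (map_poly E GG) H_fps = rF * poly (map_poly E KK) H_fps"
proof -
  define Y where "Y = E be * sF + E ga * rF + E de * sF * rF"
  have LY: "poly (map_poly E LL) H_fps = Y"
    using NH by (simp add: LL_def mapE_pCons Y_def fps_of_poly_uminus algebra_simps)
  have "poly (map_poly E GG) H_fps = Y^2 + (E ga * E ga * (rF * rF) - (sF * sF) * E be * E be - (sF * sF) * E de * E de * (rF * rF))"
    by (simp add: GG_def mapE_add mapE_power mapE_pCons LY fps_of_poly_mult fps_of_poly_diff sF_sq rF_sq)
  also have "\<dots> = rF * (2 * E ga * Y + 2 * (sF * sF) * E be * E de)"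
    by (simp add: Y_def algebra_simps power2_eq_square)
  also have "\<dots> = rF * poly (map_poly E KK) H_fps"
    by (simp add: KK_def mapE_add mapE_smult mapE_pCons LY fps_of_poly_mult sF_sq)
  finally show ?thesis .
qed

lemma PP_root: "eval_at_H PP = 0"
proof -
  have "eval_at_H PP = (poly (map_poly E GG) H_fps)^2 - E vK * (poly (map_poly E KK) H_fps)^2"
    by (simp add: eval_at_H_def PP_def mapE_diff mapE_mult mapE_power mapE_pCons mapE_smult)
  also have "\<dots> = 0" unfolding GK rF_sq[symmetric] by (simp add: algebra_simps power2_eq_square)
  finally show ?thesis .
qed

lemma degree_PP: "degree PP = 4"
proof -
  have dL: "degree LL = 1" using NN_nz by (simp add: LL_def)
  have LL0: "LL \<noteq> 0" using dL by auto
  have dL2: "degree (LL^2) = 2" using LL0 dL by (simp add: degree_power_eq)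
  have dG: "degree GG = 2" unfolding GG_def by (subst degree_add_eq_left) (simp_all add: dL2)
  then have GG0: "GG \<noteq> 0" by auto
  have dG2: "degree (GG^2) = 4" using GG0 dG by (simp add: degree_power_eq)
  have dK: "degree KK \<le> 1"
    unfolding KK_def by (rule order.trans[OF degree_add_le]) (auto intro: order.trans[OF degree_smult_le] simp: dL)
  have dK2: "degree (KK^2) \<le> 2"
  proof -
    have "degree KK * 2 \<le> 1 * 2" using dK by simp
    then show ?thesis using degree_power_le[of KK 2] by simp
  qed
  have "degree ([:vK:] * KK^2) \<le> 0 + 2 * 1"
    by (rule order.trans[OF degree_mult_le], rule add_mono) (auto simp: dK2)
  then have "degree (- ([:vK:] * KK^2)) < degree (GG^2)" using dG2 by simp
  then have "degree (GG^2 + - ([:vK:] * KK^2)) = 4" using dG2 by (subst degree_add_eq_left) auto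
  then show ?thesis by (simp add: PP_def)
qed

lemma transfer:
  "\<exists>z. \<forall>S R. S * S = E uK \<longrightarrow> R * R = E vK \<longrightarrow> poly (map_poly E P) (qev E S R q) = qev E S R z"
proof (induction P rule: pCons_induct)
  case 0
  show ?case by (intro exI[of _ "Qd 0 0 0 0"]) simp
next
  case (pCons c P)
  then obtain z where z: "\<forall>S R. S * S = E uK \<longrightarrow> R * R = E vK \<longrightarrow> poly (map_poly E P) (qev E S R q) = qev E S R z"
    by blast
  show ?case
  proof (intro exI[of _ "qadd (qc c) (qm q z)"] allI impI)
    fix S R :: "rat poly fps" assume SR: "S * S = E uK" "R * R = E vK"
    show "poly (map_poly E (pCons c P)) (qev E S R q) = qev E S R (qadd (qc c) (qm q z))"
      using z SR by (simp add: mapE_pCons EH.qev_add EH.qev_qc EH.qev_mult[OF SR])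
  qed
qed

lemma qev_sgn: "qev E (E e * S) (E d * R) (Qd a0 a1 a2 a3) = qev E S R (Qd a0 (e * a1) (d * a2) (e * d * a3))"
  by (simp add: fps_of_poly_mult algebra_simps)

lemma sgn_sq: "e = 1 \<or> e = -1 \<Longrightarrow> S * S = E w \<Longrightarrow> (E e * S) * (E e * S) = E w"
  by (auto simp: fps_of_poly_uminus algebra_simps)

definition hS :: "K \<Rightarrow> K \<Rightarrow> rat poly fps" where "hS e d = qev E (E e * sF) (E d * rF) qH"

lemma hS_alt: "hS e d = qev E sF rF (Qd al (e * be) (d * ga) (e * d * de))"
  unfolding hS_def al_def be_def ga_def de_def by (subst quad_eta) (rule qev_sgn)

lemma hS_inj:
  assumes "hS e d = hS e' d'"
  shows "e = e' \<and> d = d'"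
proof -
  have "qev E sF rF (Qd 0 ((e - e') * be) ((d - d') * ga) ((e * d - e' * d') * de)) = hS e d - hS e' d'"
    unfolding hS_alt by (simp add: fps_of_poly_mult fps_of_poly_diff algebra_simps)
  then have "qev E sF rF (Qd 0 ((e - e') * be) ((d - d') * ga) ((e * d - e' * d') * de)) = 0" using assms by simp
  then have "E 0 + E ((e - e') * be) * sF + E ((d - d') * ga) * rF + E ((e * d - e' * d') * de) * sF * rF = 0"
    by simp
  then have "(e - e') * be = 0" "(d - d') * ga = 0" using indep by blast+
  then have "e - e' = 0" "d - d' = 0" using qH_nz by (auto simp: be_def ga_def)
  then show ?thesis by simp
qed

lemma poly_sum_bound:
  fixes p :: "'a::comm_semiring_1 poly"
  assumes "degree p \<le> n"
  shows "poly p y = (\<Sum>i\<le>n. coeff p i * y ^ i)"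
proof -
  have "poly p y = (\<Sum>i\<le>degree p. coeff p i * y ^ i)" by (rule poly_altdef)
  also have "\<dots> = (\<Sum>i\<le>n. coeff p i * y ^ i)"
    by (rule sum.mono_neutral_left) (use assms in \<open>auto simp: coeff_eq_0\<close>)
  finally show ?thesis .
qed

lemma E_inj0: "x \<noteq> 0 \<Longrightarrow> E x \<noteq> 0"
  by (simp add: E_eq0)

theorem minimal:
  assumes Q: "Q \<noteq> 0" "eval_at_H Q = 0"
  shows "4 \<le> degree Q"
proof (rule ccontr)
  assume "\<not> 4 \<le> degree Q"
  define k where "k = degree Q"
  then have k3: "k \<le> 3" using \<open>\<not> 4 \<le> degree Q\<close> by simp
  define Qt where "Qt = (\<Sum>i\<le>k. monom (coeff Q i * NN ^ (k - i)) i)"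
  have cQt: "coeff Qt j = (if j \<le> k then coeff Q j * NN ^ (k - j) else 0)" for j
    by (simp add: Qt_def coeff_sum coeff_monom)
  have dQt: "degree Qt \<le> k" by (rule degree_le) (simp add: cQt)
  have "coeff Qt k = coeff Q k" by (simp add: cQt)
  then have cQtk: "coeff Qt k \<noteq> 0" using Q(1) by (simp add: k_def)
  define MQ where "MQ = map_poly E Qt"
  have dMQ: "degree MQ \<le> k" unfolding MQ_def using dQt by (subst degree_map_poly) (auto simp: E_eq0)
  have MQ0: "MQ \<noteq> 0"
  proof
    assume "MQ = 0"
    then have "coeff MQ k = 0" by simp
    then show False using cQtk by (simp add: MQ_def coeff_map_poly E_eq0)
  qed
  have evQ: "poly (map_poly E Q) H_fps = (\<Sum>i\<le>k. E (coeff Q i) * H_fps ^ i)"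
    by (subst poly_sum_bound[of _ k]) (auto simp: k_def degree_map_poly E_eq0 coeff_map_poly)
  have "poly MQ (E NN * H_fps) = (\<Sum>i\<le>k. E (coeff Q i * NN ^ (k - i)) * (E NN * H_fps) ^ i)"
    by (subst poly_sum_bound[OF dMQ]) (simp add: MQ_def coeff_map_poly cQt)
  also have "\<dots> = (\<Sum>i\<le>k. E NN ^ k * (E (coeff Q i) * H_fps ^ i))"
  proof (rule sum.cong[OF refl])
    fix i assume "i \<in> {..k}"
    then have "E NN ^ (k - i) * E NN ^ i = E NN ^ k" by (simp add: power_add[symmetric])
    then show "E (coeff Q i * NN ^ (k - i)) * (E NN * H_fps) ^ i = E NN ^ k * (E (coeff Q i) * H_fps ^ i)"
      by (simp add: fps_of_poly_mult fps_of_poly_power power_mult_distrib algebra_simps)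
  qed
  also have "\<dots> = E NN ^ k * eval_at_H Q"
    by (simp add: eval_at_H_def evQ sum_distrib_left)
  finally have r11: "poly MQ (qev E sF rF qH) = 0" using Q(2) by (simp add: ev_qH)
  obtain z where z: "\<And>S R. S * S = E uK \<Longrightarrow> R * R = E vK \<Longrightarrow> poly MQ (qev E S R qH) = qev E S R z"
    using transfer[of Qt qH] unfolding MQ_def by blast
  have "qev E sF rF z = 0" using z[OF sF_sq rF_sq] r11 by simp
  then have z0: "z = Qd 0 0 0 0" using indep quad_eta[of z] by (metis qev.simps)
  have root: "poly MQ (hS e d) = 0" if "e = 1 \<or> e = -1" "d = 1 \<or> d = -1" for e d
    unfolding hS_def using z[OF sgn_sq[OF that(1) sF_sq] sgn_sq[OF that(2) rF_sq]] z0 by simp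
  let ?R = "{hS 1 1, hS 1 (-1), hS (-1) 1, hS (-1) (-1)}"
  have sub: "?R \<subseteq> {y. poly MQ y = 0}" using root by auto
  have "card ?R = 4" using hS_inj by (auto simp: card_insert_if) (metis one_neq_neg_one)+
  moreover have "card ?R \<le> card {y. poly MQ y = 0}"
    by (rule card_mono[OF poly_roots_finite[OF MQ0] sub])
  moreover have "card {y. poly MQ y = 0} \<le> degree MQ" by (rule card_poly_roots_bound[OF MQ0])
  ultimately show False using dMQ k3 by linarith
qed

theorem part1:
  "\<exists>P. P \<noteq> 0 \<and> degree P = 4 \<and> eval_at_H P = 0 \<and>
            (\<forall>Q. Q \<noteq> 0 \<and> eval_at_H Q = 0 \<longrightarrow> 4 \<le> degree Q)"
proof (intro exI[of _ PP] conjI allI impI)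
  show "PP \<noteq> 0" using degree_PP by auto
qed (auto simp: degree_PP PP_root minimal)

theorem proposition17:
  shows "(\<exists>P. P \<noteq> 0 \<and> degree P = 4 \<and> eval_at_H P = 0 \<and>
            (\<forall>Q. Q \<noteq> 0 \<and> eval_at_H Q = 0 \<longrightarrow> 4 \<le> degree Q)) \<and>
         (\<exists>\<epsilon>>0. \<forall>t x::real. 0 < t \<and> t < \<epsilon> \<and> 0 < x \<and> x < 1 \<longrightarrow>
            ((\<lambda>(n, m). real (h n m) * t ^ n * x ^ m) has_sum H_closed t x) UNIV)"
  using part1 part2 by (rule conjI)

end
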